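(* Let $A'=[a'_{ijk}]$ be an $m'\times n'\times k'$ hypermatrix with entries in $\{0,1,-1\}$. Then there exist an integer $n\ge\max\{m',n',k'\}$, an $n\times n\times n$ ASHM $A=[a_{ijk}]$, and index sets $I=\{i_1<\cdots<i_{m'}\}$, $J=\{j_1<\cdots<j_{n'}\}$, $K=\{k_1<\cdots<k_{k'}\}\subseteq\{1,\ldots,n\}$ such that $a'_{pqr}=a_{i_pj_qk_r}$ for all $p,q,r$; that is, $A'$ is obtained from $A$ by deleting planes. Moreover, $A$ can be obtained from $A'$ by repeatedly inserting new planes (horizontal, row-vertical and column-vertical) each of which is a subpermutation matrix or the negative of a subpermutation matrix.
   Context: An $n\times n\times n$ hypermatrix $A=[a_{ijk}]$ is an alternating sign hypermatrix (ASHM) if all entries are in $\{0,\pm1\}$ and in every line (obtained by fixing two of the three indices) the nonzeros alternate in sign beginning and ending with $+1$. Planes of a hypermatrix are obtained by fixing one index: horizontal planes (fix the third index), row-vertical planes (fix the first index), column-vertical planes (fix the second index). A subpermutation matrix is a $(0,1)$-matrix with at most one $1$ in every row and column. *)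

theory Defs
  imports Main
begin

text \<open>Hypermatrices are represented with 0-based indices: an m x n x k hypermatrix
  is a function A :: nat => nat => nat => int, of which only the entries A i j l
  with i < m, j < n, l < k are relevant.\<close>

type_synonym hmat = "nat \<Rightarrow> nat \<Rightarrow> nat \<Rightarrow> int"

definition sign_entries :: "int \<Rightarrow> bool" where
  "sign_entries x \<longleftrightarrow> x \<in> {0, 1, -1}"

definition alt_line :: "nat \<Rightarrow> (nat \<Rightarrow> int) \<Rightarrow> bool" where
  "alt_line n f \<longleftrightarrow>
     (let xs = filter (\<lambda>x. x \<noteq> 0) (map f [0..<n]) in
       xs \<noteq> [] \<and> hd xs = 1 \<and> last xs = 1 \<and>
       (\<forall>t. Suc t < length xs \<longrightarrow> xs ! Suc t = - (xs ! t)))"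

definition is_ASHM :: "nat \<Rightarrow> hmat \<Rightarrow> bool" where
  "is_ASHM n A \<longleftrightarrow>
     (\<forall>i<n. \<forall>j<n. \<forall>l<n. sign_entries (A i j l)) \<and>
     (\<forall>j<n. \<forall>l<n. alt_line n (\<lambda>i. A i j l)) \<and>
     (\<forall>i<n. \<forall>l<n. alt_line n (\<lambda>j. A i j l)) \<and>
     (\<forall>i<n. \<forall>j<n. alt_line n (\<lambda>l. A i j l))"

definition subperm :: "nat \<Rightarrow> nat \<Rightarrow> (nat \<Rightarrow> nat \<Rightarrow> int) \<Rightarrow> bool" where
  "subperm m n P \<longleftrightarrow>
     (\<forall>i<m. \<forall>j<n. P i j \<in> {0, 1}) \<and>
     (\<forall>i<m. \<forall>j<n. \<forall>j'<n. P i j = 1 \<and> P i j' = 1 \<longrightarrow> j = j') \<and>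
     (\<forall>j<n. \<forall>i<m. \<forall>i'<m. P i j = 1 \<and> P i' j = 1 \<longrightarrow> i = i')"

definition signed_subperm :: "nat \<Rightarrow> nat \<Rightarrow> (nat \<Rightarrow> nat \<Rightarrow> int) \<Rightarrow> bool" where
  "signed_subperm m n P \<longleftrightarrow> subperm m n P \<or> subperm m n (\<lambda>i j. - P i j)"

text \<open>A hypermatrix is a tuple (m, n, k, A).\<close>
inductive insert_plane :: "nat \<times> nat \<times> nat \<times> hmat \<Rightarrow> nat \<times> nat \<times> nat \<times> hmat \<Rightarrow> bool" where
  row_vertical: "t \<le> m \<Longrightarrow> signed_subperm n k P \<Longrightarrow>
    insert_plane (m, n, k, A)
      (Suc m, n, k, \<lambda>i j l. if i = t then P j l else if i < t then A i j l else A (i - 1) j l)"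
| column_vertical: "t \<le> n \<Longrightarrow> signed_subperm m k P \<Longrightarrow>
    insert_plane (m, n, k, A)
      (m, Suc n, k, \<lambda>i j l. if j = t then P i l else if j < t then A i j l else A i (j - 1) l)"
| horizontal: "t \<le> k \<Longrightarrow> signed_subperm m n P \<Longrightarrow>
    insert_plane (m, n, k, A)
      (m, n, Suc k, \<lambda>i j l. if l = t then P i j else if l < t then A i j l else A i j (l - 1))"

end

theory Submission
  imports Defs
begin

definition sim :: "nat \<times> nat \<times> nat \<times> hmat \<Rightarrow> nat \<times> nat \<times> nat \<times> hmat \<Rightarrow> bool" where
  "sim X Y \<longleftrightarrow> (case X of (a,b,c,h) \<Rightarrow> case Y of (a',b',c',g) \<Rightarrow>
      a = a' \<and> b = b' \<and> c = c' \<and> (\<forall>i<a. \<forall>j<b. \<forall>l<c. h i j l = g i j l))"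

lemma sim_iff: "sim (a,b,c,h) (a',b',c',g) \<longleftrightarrow> a = a' \<and> b = b' \<and> c = c' \<and> (\<forall>i<a. \<forall>j<b. \<forall>l<c. h i j l = g i j l)"
  by (simp add: sim_def)

lemma sim_refl: "sim X X"
  by (cases X) (auto simp: sim_def)

lemma sim_sym: "sim X Y \<Longrightarrow> sim Y X"
  by (cases X; cases Y) (auto simp: sim_def)

lemma sim_trans: "sim X Y \<Longrightarrow> sim Y Z \<Longrightarrow> sim X Z"
  by (cases X; cases Y; cases Z) (auto simp: sim_def)

lemma ins_sim:
  assumes "insert_plane X Y" "sim X X'"
  shows "\<exists>Y'. insert_plane X' Y' \<and> sim Y Y'"
  using assms(1)
proof cases
  case (row_vertical t m n k P A)
  obtain h where X': "X' = (m,n,k,h)" and ag: "\<forall>i<m. \<forall>j<n. \<forall>l<k. A i j l = h i j l"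
    using assms(2) row_vertical by (cases X') (auto simp: sim_def)
  let ?Y = "(Suc m, n, k, \<lambda>i j l. if i = t then P j l else if i < t then h i j l else h (i - 1) j l)"
  have "insert_plane X' ?Y" unfolding X' using row_vertical by (intro insert_plane.row_vertical) auto
  moreover have "sim Y ?Y" using row_vertical ag by (auto simp: sim_def)
  ultimately show ?thesis by blast
next
  case (column_vertical t n m k P A)
  obtain h where X': "X' = (m,n,k,h)" and ag: "\<forall>i<m. \<forall>j<n. \<forall>l<k. A i j l = h i j l"
    using assms(2) column_vertical by (cases X') (auto simp: sim_def)
  let ?Y = "(m, Suc n, k, \<lambda>i j l. if j = t then P i l else if j < t then h i j l else h i (j - 1) l)"
  have "insert_plane X' ?Y" unfolding X' using column_vertical by (intro insert_plane.column_vertical) auto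
  moreover have "sim Y ?Y" using column_vertical ag by (auto simp: sim_def)
  ultimately show ?thesis by blast
next
  case (horizontal t k m n P A)
  obtain h where X': "X' = (m,n,k,h)" and ag: "\<forall>i<m. \<forall>j<n. \<forall>l<k. A i j l = h i j l"
    using assms(2) horizontal by (cases X') (auto simp: sim_def)
  let ?Y = "(m, n, Suc k, \<lambda>i j l. if l = t then P i j else if l < t then h i j l else h i j (l - 1))"
  have "insert_plane X' ?Y" unfolding X' using horizontal by (intro insert_plane.horizontal) auto
  moreover have "sim Y ?Y" using horizontal ag by (auto simp: sim_def)
  ultimately show ?thesis by blast
qed

lemma insstar_sim:
  assumes "insert_plane\<^sup>*\<^sup>* X Y" "sim X X'"
  shows "\<exists>Y'. insert_plane\<^sup>*\<^sup>* X' Y' \<and> sim Y Y'"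
  using assms
proof (induction arbitrary: X' rule: rtranclp_induct)
  case base then show ?case by blast
next
  case (step Y Z)
  then obtain Y' where "insert_plane\<^sup>*\<^sup>* X' Y'" "sim Y Y'" by blast
  with ins_sim[OF step(2) this(2)] show ?case by (meson rtranclp.rtrancl_into_rtrancl)
qed

definition reach where "reach X Y \<longleftrightarrow> (\<exists>Y'. insert_plane\<^sup>*\<^sup>* X Y' \<and> sim Y' Y)"

lemma reach_refl: "reach X X"
  unfolding reach_def using sim_refl by blast

lemma reach_sim: "reach X Y \<Longrightarrow> sim Y Z \<Longrightarrow> reach X Z"
  unfolding reach_def using sim_trans by blast

lemma sim_reach: "sim X Y \<Longrightarrow> reach Y Z \<Longrightarrow> reach X Z"
  unfolding reach_def by (meson insstar_sim sim_sym sim_trans)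

lemma reach_trans: "reach X Y \<Longrightarrow> reach Y Z \<Longrightarrow> reach X Z"
  unfolding reach_def by (meson insstar_sim rtranclp_trans sim_sym sim_trans)

lemma reach_step: "insert_plane X Y \<Longrightarrow> reach X Y"
  unfolding reach_def using sim_refl by blast

definition embeds :: "nat \<times> nat \<times> nat \<times> hmat \<Rightarrow> nat \<times> nat \<times> nat \<times> hmat \<Rightarrow> bool" where
  "embeds X Y \<longleftrightarrow> (case X of (a,b,c,h) \<Rightarrow> case Y of (a',b',c',g) \<Rightarrow>
     (\<exists>fI fJ fK. strict_mono_on {..<a} fI \<and> fI ` {..<a} \<subseteq> {..<a'} \<and>
        strict_mono_on {..<b} fJ \<and> fJ ` {..<b} \<subseteq> {..<b'} \<and>
        strict_mono_on {..<c} fK \<and> fK ` {..<c} \<subseteq> {..<c'} \<and>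
        (\<forall>i<a. \<forall>j<b. \<forall>l<c. h i j l = g (fI i) (fJ j) (fK l))))"

lemma embeds_refl: "embeds X X"
proof (cases X)
  case (fields a b c h)
  then show ?thesis unfolding embeds_def
    by (auto intro!: exI[of _ id] simp: strict_mono_on_def)
qed

lemma embeds_sim: "sim X Y \<Longrightarrow> embeds X Y"
proof (cases X; cases Y)
  fix a b c h a' b' c' g assume s: "sim X Y" and X: "X = (a,b,c,h)" and Y: "Y = (a',b',c',g)"
  then show ?thesis unfolding embeds_def using s
    by (auto intro!: exI[of _ id] simp: strict_mono_on_def sim_def)
qed

lemma strict_mono_on_comp:
  assumes "strict_mono_on A f" "f ` A \<subseteq> B" "strict_mono_on B g"
  shows "strict_mono_on A (g \<circ> f)"
  using assms unfolding strict_mono_on_def by (auto simp: image_subset_iff)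

lemma embeds_trans: "embeds X Y \<Longrightarrow> embeds Y Z \<Longrightarrow> embeds X Z"
proof (cases X; cases Y; cases Z)
  fix a b c h a' b' c' g a'' b'' c'' k
  assume e1: "embeds X Y" and e2: "embeds Y Z" and X: "X = (a,b,c,h)" and Y: "Y = (a',b',c',g)" and Z: "Z = (a'',b'',c'',k)"
  obtain fI fJ fK where f: "strict_mono_on {..<a} fI" "fI ` {..<a} \<subseteq> {..<a'}"
        "strict_mono_on {..<b} fJ" "fJ ` {..<b} \<subseteq> {..<b'}"
        "strict_mono_on {..<c} fK" "fK ` {..<c} \<subseteq> {..<c'}"
        "\<forall>i<a. \<forall>j<b. \<forall>l<c. h i j l = g (fI i) (fJ j) (fK l)"
    using e1 X Y unfolding embeds_def by auto
  obtain gI gJ gK where gg: "strict_mono_on {..<a'} gI" "gI ` {..<a'} \<subseteq> {..<a''}"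
        "strict_mono_on {..<b'} gJ" "gJ ` {..<b'} \<subseteq> {..<b''}"
        "strict_mono_on {..<c'} gK" "gK ` {..<c'} \<subseteq> {..<c''}"
        "\<forall>i<a'. \<forall>j<b'. \<forall>l<c'. g i j l = k (gI i) (gJ j) (gK l)"
    using e2 Y Z unfolding embeds_def by auto
  show ?thesis unfolding embeds_def X Z
    apply (simp only: prod.case)
    apply (rule exI[of _ "gI \<circ> fI"], rule exI[of _ "gJ \<circ> fJ"], rule exI[of _ "gK \<circ> fK"])
    using f gg strict_mono_on_comp[OF f(1,2) gg(1)] strict_mono_on_comp[OF f(3,4) gg(3)]
      strict_mono_on_comp[OF f(5,6) gg(5)]
    by (auto simp: image_subset_iff)
qed

lemma embeds_ins: "insert_plane X Y \<Longrightarrow> embeds X Y"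
proof (induction rule: insert_plane.induct)
  case (row_vertical t m n k P A)
  show ?case unfolding embeds_def prod.case
    apply (rule exI[of _ "\<lambda>i. if i < t then i else Suc i"], rule exI[of _ id], rule exI[of _ id])
    by (auto simp: strict_mono_on_def)
next
  case (column_vertical t n m k P A)
  show ?case unfolding embeds_def prod.case
    apply (rule exI[of _ id], rule exI[of _ "\<lambda>i. if i < t then i else Suc i"], rule exI[of _ id])
    by (auto simp: strict_mono_on_def)
next
  case (horizontal t k m n P A)
  show ?case unfolding embeds_def prod.case
    apply (rule exI[of _ id], rule exI[of _ id], rule exI[of _ "\<lambda>i. if i < t then i else Suc i"])
    by (auto simp: strict_mono_on_def)
qed

lemma embeds_insstar: "insert_plane\<^sup>*\<^sup>* X Y \<Longrightarrow> embeds X Y"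
  by (induction rule: rtranclp_induct) (auto intro: embeds_refl embeds_trans embeds_ins)

lemma embeds_reach: "reach X Y \<Longrightarrow> embeds X Y"
  unfolding reach_def using embeds_insstar embeds_sim embeds_trans by blast

definition pre :: "(nat \<Rightarrow> int) \<Rightarrow> nat \<Rightarrow> int" where "pre g k = (\<Sum>i<k. g i)"
definition POK :: "nat \<Rightarrow> (nat \<Rightarrow> int) \<Rightarrow> bool" where "POK n g \<longleftrightarrow> (\<forall>k\<le>n. pre g k \<in> {0,1})"
definition single :: "nat \<Rightarrow> (nat \<Rightarrow> int) \<Rightarrow> bool" where
  "single n g \<longleftrightarrow> (\<forall>i<n. \<forall>i'<n. g i \<noteq> 0 \<longrightarrow> g i' \<noteq> 0 \<longrightarrow> i = i')"
definition good :: "nat \<Rightarrow> (nat \<Rightarrow> int) \<Rightarrow> bool" where "good n g \<longleftrightarrow> POK n g \<and> pre g n = 1"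

lemma pre_Suc: "pre g (Suc k) = pre g k + g k" by (simp add: pre_def)
lemma pre_0[simp]: "pre g 0 = 0" by (simp add: pre_def)

definition nzl :: "(nat \<Rightarrow> int) \<Rightarrow> nat \<Rightarrow> int list" where
  "nzl g n = filter (\<lambda>x. x \<noteq> 0) (map g [0..<n])"

lemma nzl_Suc: "nzl g (Suc n) = nzl g n @ (if g n = 0 then [] else [g n])"
  by (simp add: nzl_def)

lemma good_alt_aux:
  assumes ent: "\<forall>i<n. g i \<in> {0,1,-1}" and pok: "POK n g"
  shows "(nzl g n = [] \<longrightarrow> pre g n = 0) \<and>
          (nzl g n \<noteq> [] \<longrightarrow> hd (nzl g n) = 1 \<and> pre g n = (if last (nzl g n) = 1 then 1 else 0) \<and>
              (\<forall>t. Suc t < length (nzl g n) \<longrightarrow> nzl g n ! Suc t = - (nzl g n ! t))) \<and> set (nzl g n) \<subseteq> {1,-1}"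
  using ent pok
proof (induction n)
  case 0 then show ?case by (simp add: nzl_def)
next
  case (Suc n)
  have ent': "\<forall>i<n. g i \<in> {0,1,-1}" using Suc.prems by auto
  have pok': "POK n g" using Suc.prems(2) by (auto simp: POK_def)
  define xs where "xs = nzl g n"
  have IH: "(xs = [] \<longrightarrow> pre g n = 0) \<and>
          (xs \<noteq> [] \<longrightarrow> hd xs = 1 \<and> pre g n = (if last xs = 1 then 1 else 0) \<and>
              (\<forall>t. Suc t < length xs \<longrightarrow> xs ! Suc t = - (xs ! t))) \<and> set xs \<subseteq> {1,-1}"
    using Suc.IH[OF ent' pok'] unfolding xs_def .
  have gn: "g n \<in> {0,1,-1}" using Suc.prems by auto
  have pn: "pre g n \<in> {0,1}" using pok' by (auto simp: POK_def)
  have psn: "pre g n + g n \<in> {0,1}" using Suc.prems(2) by (auto simp: POK_def pre_Suc)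
  have xs': "nzl g (Suc n) = xs @ (if g n = 0 then [] else [g n])"
    by (simp add: xs_def nzl_Suc)
  show ?case
  proof (cases "g n = 0")
    case True
    then have "nzl g (Suc n) = xs" using xs' by simp
    then show ?thesis using IH True by (simp add: pre_Suc)
  next
    case False
    note F = False
    show ?thesis
    proof (cases "xs = []")
      case True
      then have "pre g n = 0" using IH by simp
      then have "g n = 1" using psn F gn by auto
      then show ?thesis using True xs' by (simp add: pre_Suc \<open>pre g n = 0\<close>)
    next
      case ne: False
      have "last xs \<in> set xs" using ne by simp
      then have lx: "last xs \<in> {1,-1}" using IH by blast
      have alt: "\<forall>t. Suc t < length (xs @ [g n]) \<longrightarrow> (xs @ [g n]) ! Suc t = - ((xs @ [g n]) ! t)"
        if lst: "last xs = - g n"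
      proof (intro allI impI)
        fix t assume t: "Suc t < length (xs @ [g n])"
        show "(xs @ [g n]) ! Suc t = - ((xs @ [g n]) ! t)"
        proof (cases "Suc t < length xs")
          case True then show ?thesis using IH ne by (simp add: nth_append)
        next
          case False
          then have st: "Suc t = length xs" using t by simp
          then have "t = length xs - 1" by simp
          then show ?thesis using lst ne st by (simp add: nth_append last_conv_nth)
        qed
      qed
      show ?thesis
      proof (cases "g n = 1")
        case True
        then have "pre g n = 0" using psn pn by auto
        then have "last xs = -1" using IH ne lx by (auto split: if_splits)
        then show ?thesis using IH ne True alt xs' \<open>pre g n = 0\<close> by (simp add: pre_Suc)
      next
        case False
        then have gm: "g n = -1" using F gn by auto
        then have "pre g n = 1" using psn pn by auto
        have "last xs = 1"
        proof (rule ccontr)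
          assume "last xs \<noteq> 1"
          then have "pre g n = 0" using IH ne by simp
          with \<open>pre g n = 1\<close> show False by simp
        qed
        then show ?thesis using IH ne gm alt xs' \<open>pre g n = 1\<close> by (simp add: pre_Suc)
      qed
    qed
  qed
qed

lemma good_alt:
  assumes ent: "\<forall>i<n. g i \<in> {0,1,-1}" and gd: "good n g"
  shows "alt_line n g"
proof -
  have pok: "POK n g" and p1: "pre g n = 1" using gd by (auto simp: good_def)
  show ?thesis using good_alt_aux[OF ent pok] p1 unfolding alt_line_def Let_def nzl_def[symmetric]
    by (auto split: if_splits)
qed

definition D1 :: "(nat \<Rightarrow> (nat \<Rightarrow> int) \<Rightarrow> bool) \<Rightarrow> nat \<Rightarrow> nat \<Rightarrow> nat \<Rightarrow> hmat \<Rightarrow> bool" where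
  "D1 \<Phi> a b c h \<longleftrightarrow> (\<forall>j<b. \<forall>l<c. \<Phi> a (\<lambda>i. h i j l))"
definition D2 :: "(nat \<Rightarrow> (nat \<Rightarrow> int) \<Rightarrow> bool) \<Rightarrow> nat \<Rightarrow> nat \<Rightarrow> nat \<Rightarrow> hmat \<Rightarrow> bool" where
  "D2 \<Phi> a b c h \<longleftrightarrow> (\<forall>i<a. \<forall>l<c. \<Phi> b (\<lambda>j. h i j l))"
definition D3 :: "(nat \<Rightarrow> (nat \<Rightarrow> int) \<Rightarrow> bool) \<Rightarrow> nat \<Rightarrow> nat \<Rightarrow> nat \<Rightarrow> hmat \<Rightarrow> bool" where
  "D3 \<Phi> a b c h \<longleftrightarrow> (\<forall>i<a. \<forall>j<b. \<Phi> c (\<lambda>l. h i j l))"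
definition ent :: "nat \<Rightarrow> nat \<Rightarrow> nat \<Rightarrow> hmat \<Rightarrow> bool" where
  "ent a b c h \<longleftrightarrow> (\<forall>i<a. \<forall>j<b. \<forall>l<c. h i j l \<in> {0,1,-1})"

definition sw12 :: "hmat \<Rightarrow> hmat" where "sw12 h = (\<lambda>i j l. h j i l)"
definition sw13 :: "hmat \<Rightarrow> hmat" where "sw13 h = (\<lambda>i j l. h l j i)"

lemma sw12_sw12[simp]: "sw12 (sw12 h) = h" by (simp add: sw12_def)
lemma sw13_sw13[simp]: "sw13 (sw13 h) = h" by (simp add: sw13_def)

lemma signed_subperm_transp: "signed_subperm m n P \<Longrightarrow> signed_subperm n m (\<lambda>i j. P j i)"
  unfolding signed_subperm_def subperm_def by blast

definition swp12 :: "nat \<times> nat \<times> nat \<times> hmat \<Rightarrow> nat \<times> nat \<times> nat \<times> hmat" where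
  "swp12 X = (case X of (a,b,c,h) \<Rightarrow> (b,a,c,sw12 h))"
definition swp13 :: "nat \<times> nat \<times> nat \<times> hmat \<Rightarrow> nat \<times> nat \<times> nat \<times> hmat" where
  "swp13 X = (case X of (a,b,c,h) \<Rightarrow> (c,b,a,sw13 h))"

lemma ins_swp12: "insert_plane X Y \<Longrightarrow> insert_plane (swp12 X) (swp12 Y)"
proof (induction rule: insert_plane.induct)
  case (row_vertical t m n k P A)
  show ?case unfolding swp12_def sw12_def prod.case
    using insert_plane.column_vertical[of t m n k P "\<lambda>i j l. A j i l"] row_vertical by simp
next
  case (column_vertical t n m k P A)
  show ?case unfolding swp12_def sw12_def prod.case
    using insert_plane.row_vertical[of t n m k P "\<lambda>i j l. A j i l"] column_vertical by simp
next
  case (horizontal t k m n P A)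
  show ?case unfolding swp12_def sw12_def prod.case
    using insert_plane.horizontal[of t k n m "\<lambda>i j. P j i" "\<lambda>i j l. A j i l"] horizontal
      signed_subperm_transp by simp
qed

lemma ins_swp13: "insert_plane X Y \<Longrightarrow> insert_plane (swp13 X) (swp13 Y)"
proof (induction rule: insert_plane.induct)
  case (row_vertical t m n k P A)
  show ?case unfolding swp13_def sw13_def prod.case
    using insert_plane.horizontal[of t m k n "\<lambda>i j. P j i" "\<lambda>i j l. A l j i"] row_vertical
      signed_subperm_transp by simp
next
  case (column_vertical t n m k P A)
  show ?case unfolding swp13_def sw13_def prod.case
    using insert_plane.column_vertical[of t n k m "\<lambda>i j. P j i" "\<lambda>i j l. A l j i"] column_vertical
      signed_subperm_transp by simp
next
  case (horizontal t k m n P A)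
  show ?case unfolding swp13_def sw13_def prod.case
    using insert_plane.row_vertical[of t k n m "\<lambda>i j. P j i" "\<lambda>i j l. A l j i"] horizontal
      signed_subperm_transp by simp
qed

lemma insstar_swp12: "insert_plane\<^sup>*\<^sup>* X Y \<Longrightarrow> insert_plane\<^sup>*\<^sup>* (swp12 X) (swp12 Y)"
  by (induction rule: rtranclp_induct) (auto intro: rtranclp.rtrancl_into_rtrancl ins_swp12)
lemma insstar_swp13: "insert_plane\<^sup>*\<^sup>* X Y \<Longrightarrow> insert_plane\<^sup>*\<^sup>* (swp13 X) (swp13 Y)"
  by (induction rule: rtranclp_induct) (auto intro: rtranclp.rtrancl_into_rtrancl ins_swp13)

lemma sim_swp12: "sim X Y \<Longrightarrow> sim (swp12 X) (swp12 Y)"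
  by (cases X; cases Y) (auto simp: sim_def swp12_def sw12_def)
lemma sim_swp13: "sim X Y \<Longrightarrow> sim (swp13 X) (swp13 Y)"
  by (cases X; cases Y) (auto simp: sim_def swp13_def sw13_def)

lemma reach_swp12: "reach X Y \<Longrightarrow> reach (swp12 X) (swp12 Y)"
  unfolding reach_def using insstar_swp12 sim_swp12 by blast
lemma reach_swp13: "reach X Y \<Longrightarrow> reach (swp13 X) (swp13 Y)"
  unfolding reach_def using insstar_swp13 sim_swp13 by blast

lemma reach12: "reach (b,a,c,sw12 h) (b',a',c',sw12 h') \<Longrightarrow> reach (a,b,c,h) (a',b',c',h')"
  using reach_swp12[of "(b,a,c,sw12 h)" "(b',a',c',sw12 h')"] by (simp add: swp12_def)
lemma reach13: "reach (c,b,a,sw13 h) (c',b',a',sw13 h') \<Longrightarrow> reach (a,b,c,h) (a',b',c',h')"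
  using reach_swp13[of "(c,b,a,sw13 h)" "(c',b',a',sw13 h')"] by (simp add: swp13_def)

lemma D12[simp]: "D1 \<Phi> b a c (sw12 h) = D2 \<Phi> a b c h" by (auto simp: D1_def D2_def sw12_def)
lemma D21[simp]: "D2 \<Phi> b a c (sw12 h) = D1 \<Phi> a b c h" by (auto simp: D1_def D2_def sw12_def)
lemma D33[simp]: "D3 \<Phi> b a c (sw12 h) = D3 \<Phi> a b c h" by (auto simp: D3_def sw12_def)
lemma D13[simp]: "D1 \<Phi> c b a (sw13 h) = D3 \<Phi> a b c h" by (auto simp: D1_def D3_def sw13_def)
lemma D31[simp]: "D3 \<Phi> c b a (sw13 h) = D1 \<Phi> a b c h" by (auto simp: D1_def D3_def sw13_def)
lemma D22[simp]: "D2 \<Phi> c b a (sw13 h) = D2 \<Phi> a b c h" by (auto simp: D2_def sw13_def)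
lemma ent12[simp]: "ent b a c (sw12 h) = ent a b c h" by (auto simp: ent_def sw12_def)
lemma ent13[simp]: "ent c b a (sw13 h) = ent a b c h" by (auto simp: ent_def sw13_def)

lemma append1:
  assumes "\<forall>k<t. signed_subperm b c (P k)"
  shows "reach (a,b,c,h) (a+t, b, c, \<lambda>i j l. if i < a then h i j l else P (i - a) j l)"
  using assms
proof (induction t)
  case 0
  show ?case using reach_refl[of "(a,b,c,h)"] by (rule reach_sim) (auto simp: sim_def)
next
  case (Suc t)
  let ?F = "\<lambda>i j l. if i < a then h i j l else P (i - a) j l"
  have r: "reach (a,b,c,h) (a+t, b, c, ?F)" using Suc by auto
  have "insert_plane (a+t,b,c,?F) (Suc (a+t), b, c, \<lambda>i j l. if i = a+t then P t j l else if i < a+t then ?F i j l else ?F (i - 1) j l)"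
    using Suc.prems by (intro insert_plane.row_vertical) auto
  then have "reach (a+t,b,c,?F) (a + Suc t, b, c, ?F)"
    by (rule reach_sim[OF reach_step]) (auto simp: sim_def)
  then show ?case using r reach_trans by blast
qed

lemma append2:
  assumes "\<forall>k<t. signed_subperm a c (P k)"
  shows "reach (a,b,c,h) (a, b+t, c, \<lambda>i j l. if j < b then h i j l else P (j - b) i l)"
  using assms
proof (induction t)
  case 0
  show ?case using reach_refl[of "(a,b,c,h)"] by (rule reach_sim) (auto simp: sim_def)
next
  case (Suc t)
  let ?F = "\<lambda>i j l. if j < b then h i j l else P (j - b) i l"
  have r: "reach (a,b,c,h) (a, b+t, c, ?F)" using Suc by auto
  have "insert_plane (a,b+t,c,?F) (a, Suc (b+t), c, \<lambda>i j l. if j = b+t then P t i l else if j < b+t then ?F i j l else ?F i (j - 1) l)"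
    using Suc.prems by (intro insert_plane.column_vertical) auto
  then have "reach (a,b+t,c,?F) (a, b + Suc t, c, ?F)"
    by (rule reach_sim[OF reach_step]) (auto simp: sim_def)
  then show ?case using r reach_trans by blast
qed

lemma append3:
  assumes "\<forall>k<t. signed_subperm a b (P k)"
  shows "reach (a,b,c,h) (a, b, c+t, \<lambda>i j l. if l < c then h i j l else P (l - c) i j)"
  using assms
proof (induction t)
  case 0
  show ?case using reach_refl[of "(a,b,c,h)"] by (rule reach_sim) (auto simp: sim_def)
next
  case (Suc t)
  let ?F = "\<lambda>i j l. if l < c then h i j l else P (l - c) i j"
  have r: "reach (a,b,c,h) (a, b, c+t, ?F)" using Suc by auto
  have "insert_plane (a,b,c+t,?F) (a, b, Suc (c+t), \<lambda>i j l. if l = c+t then P t i j else if l < c+t then ?F i j l else ?F i j (l - 1))"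
    using Suc.prems by (intro insert_plane.horizontal) auto
  then have "reach (a,b,c+t,?F) (a, b, c + Suc t, ?F)"
    by (rule reach_sim[OF reach_step]) (auto simp: sim_def)
  then show ?case using r reach_trans by blast
qed

definition layf :: "(nat + (nat \<Rightarrow> nat \<Rightarrow> int)) list \<Rightarrow> hmat \<Rightarrow> hmat" where
  "layf L h = (\<lambda>i j l. case L ! i of Inl p \<Rightarrow> h p j l | Inr P \<Rightarrow> P j l)"

lemma layout_aux:
  assumes "n = length (filter (\<lambda>x. \<not> isl x) L)"
    and "map projl (filter isl L) = [0..<a]"
    and "\<forall>x\<in>set L. \<not> isl x \<longrightarrow> signed_subperm b c (projr x)"
  shows "reach (a,b,c,h) (length L, b, c, layf L h)"
  using assms
proof (induction n arbitrary: L)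
  case 0
  then have "\<forall>x\<in>set L. isl x" by (auto simp: filter_empty_conv)
  then have fl: "filter isl L = L" by (simp add: filter_id_conv)
  then have L: "map projl L = [0..<a]" using 0 by simp
  then have len: "length L = a" by (metis length_map length_upt diff_zero)
  have "\<forall>i<a. L ! i = Inl i"
  proof (intro allI impI)
    fix i assume "i < a"
    then have "projl (L ! i) = i" using L len by (metis add_0 nth_map nth_upt)
    moreover have "isl (L ! i)" using \<open>\<forall>x\<in>set L. isl x\<close> \<open>i < a\<close> len by auto
    ultimately show "L ! i = Inl i" by (cases "L ! i") auto
  qed
  then show ?case using len
    by (intro reach_sim[OF reach_refl]) (auto simp: sim_def layf_def)
next
  case (Suc n)
  then have "filter (\<lambda>x. \<not> isl x) L \<noteq> []" by auto
  then have "\<exists>x\<in>set L. \<not> isl x" by (simp add: filter_empty_conv)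
  then obtain L1 x L2 where L: "L = L1 @ x # L2" and x: "\<not> isl x" and L2: "\<forall>z\<in>set L2. isl z"
    using split_list_last_prop[of L "\<lambda>x. \<not> isl x"] by blast
  define L' where "L' = L1 @ L2"
  have n': "n = length (filter (\<lambda>x. \<not> isl x) L')" using Suc.prems(1) x L2 unfolding L L'_def
    by (simp add: filter_empty_conv)
  have pl: "map projl (filter isl L') = [0..<a]" using Suc.prems(2) x unfolding L L'_def by simp
  have sp: "\<forall>x\<in>set L'. \<not> isl x \<longrightarrow> signed_subperm b c (projr x)" using Suc.prems(3) unfolding L L'_def by auto
  have r1: "reach (a,b,c,h) (length L', b, c, layf L' h)" using Suc.IH[OF n' pl sp] .
  define t where "t = length L1"
  have "x \<in> set L" unfolding L by simp
  then have spx: "signed_subperm b c (projr x)" using Suc.prems(3) x by blast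
  have "insert_plane (length L', b, c, layf L' h)
     (Suc (length L'), b, c, \<lambda>i j l. if i = t then projr x j l else if i < t then layf L' h i j l else layf L' h (i - 1) j l)"
    using spx by (intro insert_plane.row_vertical) (auto simp: t_def L'_def)
  moreover have "sim (Suc (length L'), b, c, \<lambda>i j l. if i = t then projr x j l else if i < t then layf L' h i j l else layf L' h (i - 1) j l)
      (length L, b, c, layf L h)"
  proof -
    have "length L = Suc (length L')" by (simp add: L L'_def)
    moreover have "\<forall>i<length L. \<forall>j l. (if i = t then projr x j l else if i < t then layf L' h i j l else layf L' h (i - 1) j l) = layf L h i j l"
    proof (intro allI impI)
      fix i j l assume i: "i < length L"
      show "(if i = t then projr x j l else if i < t then layf L' h i j l else layf L' h (i - 1) j l) = layf L h i j l"
      proof (cases "i = t")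
        case True
        then have "L ! i = x" by (simp add: L t_def)
        then show ?thesis using True x by (cases x) (auto simp: layf_def)
      next
        case False
        show ?thesis
        proof (cases "i < t")
          case True
          then have "L ! i = L' ! i" by (simp add: L L'_def t_def nth_append)
          then show ?thesis using True False by (simp add: layf_def)
        next
          case False2: False
          then have "i > t" using False by simp
          then have "L ! i = L' ! (i - 1)" using i
            by (auto simp: L L'_def t_def nth_append nth_Cons' split: if_splits)
          then show ?thesis using False False2 by (simp add: layf_def)
        qed
      qed
    qed
    ultimately show ?thesis by (auto simp: sim_def)
  qed
  ultimately have "reach (length L', b, c, layf L' h) (length L, b, c, layf L h)"
    by (rule reach_sim[OF reach_step])
  then show ?case using r1 by (rule reach_trans[rotated])
qed

lemma layout:
  assumes "map projl (filter isl L) = [0..<a]"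
    and "\<forall>x\<in>set L. \<not> isl x \<longrightarrow> signed_subperm b c (projr x)"
  shows "reach (a,b,c,h) (length L, b, c, layf L h)"
  using layout_aux[OF refl assms] .

lemma mod_inj_aux: "(j::nat) < M \<Longrightarrow> j' < M \<Longrightarrow> j \<le> j' \<Longrightarrow> (j + l) mod M = (j' + l) mod M \<Longrightarrow> j = j'"
proof -
  assume a: "j < M" "j' < M" "j \<le> j'" "(j + l) mod M = (j' + l) mod M"
  then have "M dvd (j' + l) - (j + l)" using mod_eq_dvd_iff_nat[of "j + l" "j' + l" M] by simp
  then have "M dvd j' - j" by simp
  moreover have "j' - j < M" using a by simp
  ultimately have "j' - j = 0" using nat_dvd_not_less by (metis neq0_conv)
  then show ?thesis using a by simp
qed

lemma mod_inj: "(j::nat) < M \<Longrightarrow> j' < M \<Longrightarrow> (j + l) mod M = (j' + l) mod M \<Longrightarrow> j = j'"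
  by (metis mod_inj_aux nat_le_linear)

lemma sum_single_nz:
  assumes "finite A" "\<forall>x\<in>A. x \<noteq> s \<longrightarrow> f x = 0"
  shows "sum f A = (if s \<in> A then f s else 0)"
proof (cases "s \<in> A")
  case True
  then have "sum f A = f s + sum f (A - {s})" using assms(1) by (simp add: sum.remove)
  moreover have "sum f (A - {s}) = 0" using assms(2) by (intro sum.neutral) auto
  ultimately show ?thesis using True by simp
next
  case False
  have "sum f A = 0" by (rule sum.neutral) (use False assms(2) in auto)
  then show ?thesis using False by simp
qed

lemma pre_add: "pre f (m + t) = pre f m + (\<Sum>r<t. f (m + r))"
  by (induction t) (auto simp: pre_Suc)

lemma single_POK:
  assumes "single n g" "\<forall>i<n. g i \<in> {0,1}"
  shows "POK n g"
  unfolding POK_def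
proof (intro allI impI)
  fix k assume k: "k \<le> n"
  show "pre g k \<in> {0,1}"
  proof (cases "\<exists>i<k. g i \<noteq> 0")
    case True
    then obtain s where s: "s < k" "g s \<noteq> 0" by blast
    have "\<forall>x\<in>{..<k}. x \<noteq> s \<longrightarrow> g x = 0"
    proof (intro ballI impI)
      fix x assume x: "x \<in> {..<k}" "x \<noteq> s"
      show "g x = 0"
      proof (rule ccontr)
        assume "g x \<noteq> 0"
        moreover have "x < n" "s < n" using x s k by auto
        ultimately have "x = s" using assms(1) s unfolding single_def by blast
        then show False using x by simp
      qed
    qed
    then have "pre g k = g s" unfolding pre_def using sum_single_nz[of "{..<k}" s g] s by simp
    moreover have "s < n" using s k by simp
    then have "g s \<in> {0,1}" using assms(2) by blast
    ultimately show ?thesis using s by auto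
  next
    case False
    then have "pre g k = 0" unfolding pre_def by (simp add: sum.neutral)
    then show ?thesis by simp
  qed
qed

primrec gs :: "(nat \<Rightarrow> int) \<Rightarrow> nat \<Rightarrow> int" where
  "gs g 0 = 0"
| "gs g (Suc p) = (if gs g p + g p \<in> {0,1} then gs g p + g p else gs g p)"

definition gw :: "(nat \<Rightarrow> int) \<Rightarrow> nat \<Rightarrow> int" where
  "gw g p = (if gs g p + g p \<in> {0,1} then 0 else - g p)"

lemma gs_01: "gs g p \<in> {0,1}" by (induction p) auto

lemma gs_Suc_eq: "gs g (Suc p) = gs g p + gw g p + g p" by (simp add: gw_def)

lemma gw_vals: "g p \<in> {0,1,-1} \<Longrightarrow> gw g p \<in> {0,1,-1}"
  by (auto simp: gw_def)

lemma gw_ok: "g p \<in> {0,1,-1} \<Longrightarrow> gw g p \<noteq> 0 \<Longrightarrow> gs g p + gw g p \<in> {0,1}"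
  using gs_01[of g p] by (auto simp: gw_def split: if_splits)

lemma gs_pre: "POK n g \<Longrightarrow> p \<le> n \<Longrightarrow> gs g p = pre g p"
proof (induction p)
  case 0 then show ?case by simp
next
  case (Suc p)
  then have "gs g p = pre g p" by simp
  moreover have "pre g (Suc p) \<in> {0,1}" using Suc.prems by (auto simp: POK_def)
  ultimately show ?case by (simp add: pre_Suc)
qed

lemma gs_one: "gs g p = 1 \<Longrightarrow> \<exists>p'<p. g p' = 1"
proof (induction p)
  case 0 then show ?case by simp
next
  case (Suc p)
  show ?case
  proof (cases "gs g p = 1")
    case True then show ?thesis using Suc.IH by (meson less_SucI)
  next
    case False
    then have "gs g p = 0" using gs_01[of g p] by auto
    then have "g p = 1" using Suc.prems by (auto split: if_splits)
    then show ?thesis by auto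
  qed
qed

lemma gw_neg: "gw g p = -1 \<Longrightarrow> g p \<in> {0,1,-1} \<Longrightarrow> gs g p = 1 \<and> g p = 1"
  using gs_01[of g p] by (auto simp: gw_def split: if_splits)

lemma PS_no_neg:
  assumes "POK n g \<or> single n g" "p < n" "\<forall>q<n. g q \<in> {0,1,-1}"
  shows "gw g p \<noteq> -1"
proof
  assume neg: "gw g p = -1"
  then have gs1: "gs g p = 1" and g1: "g p = 1" using gw_neg assms(2,3) by auto
  show False using assms(1)
  proof
    assume "POK n g"
    then have "gs g p = pre g p" using gs_pre assms(2) by simp
    moreover have "pre g (Suc p) \<in> {0,1}" using \<open>POK n g\<close> assms(2) by (auto simp: POK_def)
    ultimately show False using gs1 g1 by (simp add: pre_Suc)
  next
    assume "single n g"
    obtain p' where p': "p' < p" "g p' = 1" using gs_one[OF gs1] by blast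
    have "p' < n" using p' assms(2) by simp
    then have "p' = p" using \<open>single n g\<close> g1 p' assms(2) unfolding single_def by simp
    then show False using p' by simp
  qed
qed

definition Qp :: "nat \<Rightarrow> hmat \<Rightarrow> nat \<Rightarrow> nat \<Rightarrow> nat \<Rightarrow> nat \<Rightarrow> int" where
  "Qp M h p r j l = (let \<sigma> = (if r < M then 1 else -1 :: int) in
      if gw (\<lambda>q. h q j l) p = \<sigma> \<and> (j + l) mod M = r mod M then \<sigma> else 0)"

definition GP :: "nat \<Rightarrow> hmat \<Rightarrow> hmat" where
  "GP M h i j l = (if i mod Suc (2*M) < 2*M then Qp M h (i div Suc (2*M)) (i mod Suc (2*M)) j l
       else h (i div Suc (2*M)) j l)"

definition LP :: "nat \<Rightarrow> nat \<Rightarrow> hmat \<Rightarrow> (nat + (nat \<Rightarrow> nat \<Rightarrow> int)) list" where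
  "LP M a h = concat (map (\<lambda>p. map (\<lambda>r. Inr (Qp M h p r)) [0..<2*M] @ [Inl p]) [0..<a])"

lemma nth_concat_blocks:
  assumes "\<forall>p. length (f p) = K" "p < a" "r < K"
  shows "concat (map f [0..<a]) ! (p*K + r) = f p ! r"
  using assms(2)
proof (induction a)
  case 0 then show ?case by simp
next
  case (Suc a)
  have len: "length (concat (map f [0..<a])) = a * K"
    using assms(1) by (simp add: length_concat comp_def sum_list_triv)
  show ?case
  proof (cases "p < a")
    case True
    have "p * K + r < Suc p * K" using assms(3) by simp
    also have "\<dots> \<le> a * K" using True by (intro mult_le_mono1) simp
    finally have "p * K + r < a * K" .
    have eq: "concat (map f [0..<Suc a]) = concat (map f [0..<a]) @ f a" by simp
    have "concat (map f [0..<Suc a]) ! (p * K + r) = concat (map f [0..<a]) ! (p * K + r)"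
      unfolding eq nth_append using \<open>p * K + r < a * K\<close> len by (simp only: if_True)
    then show ?thesis using Suc.IH[OF True] by (rule trans)
  next
    case False
    then have pa: "p = a" using Suc.prems by simp
    have eq: "concat (map f [0..<Suc a]) = concat (map f [0..<a]) @ f a" by simp
    have ix: "p * K + r = length (concat (map f [0..<a])) + r" using len pa by simp
    show ?thesis
      apply (simp only: eq ix)
      apply (simp only: nth_append_length_plus pa)
      done
  qed
qed

lemma divmod_block:
  assumes "r < (K::nat)"
  shows "(p * K + r) div K = p" "(p * K + r) mod K = r"
  using assms by auto

lemma LP_len: "length (LP M a h) = a * Suc (2*M)"
  by (simp add: LP_def length_concat comp_def sum_list_triv)

lemma LP_nth:
  assumes "p < a" "r < Suc (2*M)"
  shows "LP M a h ! (p * Suc (2*M) + r) = (if r < 2*M then Inr (Qp M h p r) else Inl p)"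
proof -
  have "LP M a h ! (p * Suc (2*M) + r) = (map (\<lambda>r. Inr (Qp M h p r)) [0..<2*M] @ [Inl p]) ! r"
    unfolding LP_def by (rule nth_concat_blocks) (use assms in auto)
  also have "\<dots> = (if r < 2*M then Inr (Qp M h p r) else Inl p)"
    using assms(2) by (auto simp: nth_append)
  finally show ?thesis .
qed

lemma LP_isl: "map projl (filter isl (LP M a h)) = [0..<a]"
proof (induction a)
  case 0 then show ?case by (simp add: LP_def)
next
  case (Suc a)
  have "LP M (Suc a) h = LP M a h @ (map (\<lambda>r. Inr (Qp M h a r)) [0..<2*M] @ [Inl a])"
    by (simp add: LP_def)
  moreover have "filter isl (map (\<lambda>r. Inr (Qp M h a r)) [0..<2*M] :: (nat + (nat \<Rightarrow> nat \<Rightarrow> int)) list) = []"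
    by (induction M) auto
  ultimately show ?case using Suc by simp
qed

lemma LP_set: "x \<in> set (LP M a h) \<Longrightarrow> \<not> isl x \<Longrightarrow> \<exists>p r. r < 2*M \<and> x = Inr (Qp M h p r)"
  by (auto simp: LP_def) blast

lemma mod_inj2: "(l::nat) < M \<Longrightarrow> l' < M \<Longrightarrow> (j + l) mod M = (j + l') mod M \<Longrightarrow> l = l'"
  using mod_inj[of l M l' j] by (simp add: add.commute)

lemma Qp_vals: "Qp M h p r j l \<in> (if r < M then {0,1} else {0,-1})"
  by (auto simp: Qp_def Let_def)

lemma Qp_subperm:
  assumes "b \<le> M" "c \<le> M"
  shows "signed_subperm b c (Qp M h p r)"
proof (cases "r < M")
  case True
  have "subperm b c (Qp M h p r)"
    unfolding subperm_def
  proof (intro conjI allI impI)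
    fix i j assume "i < b" "j < c"
    then show "Qp M h p r i j \<in> {0,1}" using Qp_vals[of M h p r i j] True by simp
  next
    fix i j j' assume ij: "i < b" "j < c" "j' < c" "Qp M h p r i j = 1 \<and> Qp M h p r i j' = 1"
    then have "(i + j) mod M = (i + j') mod M" by (auto simp: Qp_def Let_def split: if_splits)
    then show "j = j'" using mod_inj2[of j M j' i] ij assms by simp
  next
    fix j i i' assume ij: "j < c" "i < b" "i' < b" "Qp M h p r i j = 1 \<and> Qp M h p r i' j = 1"
    then have "(i + j) mod M = (i' + j) mod M" by (auto simp: Qp_def Let_def split: if_splits)
    then show "i = i'" using mod_inj[of i M i' j] ij assms by simp
  qed
  then show ?thesis by (simp add: signed_subperm_def)
next
  case False
  have "subperm b c (\<lambda>i j. - Qp M h p r i j)"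
    unfolding subperm_def
  proof (intro conjI allI impI)
    fix i j assume "i < b" "j < c"
    then show "- Qp M h p r i j \<in> {0,1}" using Qp_vals[of M h p r i j] False by auto
  next
    fix i j j' assume ij: "i < b" "j < c" "j' < c" "- Qp M h p r i j = 1 \<and> - Qp M h p r i j' = 1"
    then have "(i + j) mod M = (i + j') mod M" by (auto simp: Qp_def Let_def split: if_splits)
    then show "j = j'" using mod_inj2[of j M j' i] ij assms by simp
  next
    fix j i i' assume ij: "j < c" "i < b" "i' < b" "- Qp M h p r i j = 1 \<and> - Qp M h p r i' j = 1"
    then have "(i + j) mod M = (i' + j) mod M" by (auto simp: Qp_def Let_def split: if_splits)
    then show "i = i'" using mod_inj[of i M i' j] ij assms by simp
  qed
  then show ?thesis by (simp add: signed_subperm_def)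
qed

lemma GP_block:
  assumes "r < Suc (2*M)"
  shows "GP M h (p * Suc (2*M) + r) j l = (if r < 2*M then Qp M h p r j l else h p j l)"
  using assms unfolding GP_def by (simp only: divmod_block[OF assms])

lemma layf_LP:
  assumes "i < a * Suc (2*M)"
  shows "layf (LP M a h) h i j l = GP M h i j l"
proof -
  let ?K = "Suc (2*M)"
  define p where "p = i div ?K"
  define r where "r = i mod ?K"
  have i: "i = p * ?K + r" unfolding p_def r_def by (rule div_mult_mod_eq[symmetric])
  have r: "r < ?K" unfolding r_def by simp
  have p: "p < a" unfolding p_def using assms by (simp add: less_mult_imp_div_less)
  show ?thesis unfolding i layf_def LP_nth[OF p r] GP_block[OF r] by simp
qed

lemma Qp_slot:
  assumes "0 < M" "r < 2*M" "gw (\<lambda>q. h q j l) p \<in> {0,1,-1}"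
  shows "Qp M h p r j l = (if gw (\<lambda>q. h q j l) p \<noteq> 0 \<and>
      r = (if gw (\<lambda>q. h q j l) p = 1 then (j+l) mod M else M + (j+l) mod M) then gw (\<lambda>q. h q j l) p else 0)"
proof (cases "r < M")
  case True
  have "(j + l) mod M < M" using assms(1) by simp
  then show ?thesis using True assms(3) by (auto simp: Qp_def Let_def)
next
  case False
  then have rm: "r mod M = r - M" using assms(2) by (simp add: le_mod_geq)
  have "(j + l) mod M < M" using assms(1) by simp
  then show ?thesis using False assms(2,3) rm by (auto simp: Qp_def Let_def)
qed

lemma Qp_sum:
  assumes "0 < M" "t \<le> 2*M" "gw (\<lambda>q. h q j l) p \<in> {0,1,-1}"
  shows "(\<Sum>r<t. Qp M h p r j l) \<in> {0, gw (\<lambda>q. h q j l) p}"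
    and "t = 2*M \<Longrightarrow> (\<Sum>r<t. Qp M h p r j l) = gw (\<lambda>q. h q j l) p"
proof -
  define w where "w = gw (\<lambda>q. h q j l) p"
  define s where "s = (if w = 1 then (j+l) mod M else M + (j+l) mod M)"
  have "(j+l) mod M < M" using assms(1) by simp
  then have s2: "s < 2*M" unfolding s_def by auto
  have eq: "\<forall>r<t. Qp M h p r j l = (if w \<noteq> 0 \<and> r = s then w else 0)"
  proof (intro allI impI)
    fix r assume "r < t"
    then have "r < 2*M" using assms(2) by simp
    from Qp_slot[where M=M and r=r and h=h and j=j and l=l and p=p, OF assms(1) this assms(3)] show "Qp M h p r j l = (if w \<noteq> 0 \<and> r = s then w else 0)"
      unfolding w_def s_def by simp
  qed
  have "(\<Sum>r<t. Qp M h p r j l) = (\<Sum>r<t. (if w \<noteq> 0 \<and> r = s then w else 0))"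
    using eq by (intro sum.cong) auto
  also have "\<dots> = (if s \<in> {..<t} then (if w \<noteq> 0 \<and> s = s then w else 0) else 0)"
    by (rule sum_single_nz) auto
  finally have S: "(\<Sum>r<t. Qp M h p r j l) = (if s < t \<and> w \<noteq> 0 then w else 0)" by auto
  then show "(\<Sum>r<t. Qp M h p r j l) \<in> {0, gw (\<lambda>q. h q j l) p}" unfolding w_def by auto
  show "t = 2*M \<Longrightarrow> (\<Sum>r<t. Qp M h p r j l) = gw (\<lambda>q. h q j l) p"
    using S s2 unfolding w_def by auto
qed

lemma GP_pre_block:
  assumes "0 < M" "p \<le> a" "\<forall>q<a. h q j l \<in> {0,1,-1}"
  shows "pre (\<lambda>i. GP M h i j l) (p * Suc (2*M)) = gs (\<lambda>q. h q j l) p"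
  using assms(2)
proof (induction p)
  case 0 then show ?case by simp
next
  case (Suc p)
  let ?K = "Suc (2*M)"
  let ?g = "\<lambda>q. h q j l"
  have pa: "p < a" using Suc.prems by simp
  have gv: "gw ?g p \<in> {0,1,-1}" using gw_vals[of ?g p] assms(3) pa by auto
  have "Suc p * ?K = p * ?K + ?K" by simp
  then have "pre (\<lambda>i. GP M h i j l) (Suc p * ?K) = pre (\<lambda>i. GP M h i j l) (p * ?K + ?K)"
    by (simp only:)
  also have "\<dots> = pre (\<lambda>i. GP M h i j l) (p * ?K) + (\<Sum>r<?K. GP M h (p * ?K + r) j l)"
    by (rule pre_add)
  also have "(\<Sum>r<?K. GP M h (p * ?K + r) j l) = (\<Sum>r<2*M. GP M h (p * ?K + r) j l) + GP M h (p * ?K + 2*M) j l"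
    by simp
  also have "(\<Sum>r<2*M. GP M h (p * ?K + r) j l) = (\<Sum>r<2*M. Qp M h p r j l)"
  proof (rule sum.cong[OF refl])
    fix r assume "r \<in> {..<2*M}"
    then have r: "r < ?K" "r < 2*M" by auto
    show "GP M h (p * ?K + r) j l = Qp M h p r j l" using GP_block[OF r(1), of h p j l] r(2) by (simp only: if_True)
  qed
  also have "\<dots> = gw ?g p" using Qp_sum(2)[where M=M and t="2*M" and h=h and j=j and l=l and p=p, OF assms(1) order.refl gv] by simp
  also have "GP M h (p * ?K + 2*M) j l = h p j l" using GP_block[of "2*M" M h p j l] by simp
  finally show ?case using Suc pa by (simp del: gs.simps(2) add: gs_Suc_eq)
qed

lemma GP_POK:
  assumes "0 < M" "\<forall>q<a. h q j l \<in> {0,1,-1}"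
  shows "POK (a * Suc (2*M)) (\<lambda>i. GP M h i j l)"
  unfolding POK_def
proof (intro allI impI)
  let ?K = "Suc (2*M)"
  let ?g = "\<lambda>q. h q j l"
  fix k assume k: "k \<le> a * ?K"
  define p where "p = k div ?K"
  define t where "t = k mod ?K"
  have kk: "k = p * ?K + t" unfolding p_def t_def by (rule div_mult_mod_eq[symmetric])
  have t: "t < ?K" unfolding t_def by simp
  show "pre (\<lambda>i. GP M h i j l) k \<in> {0,1}"
  proof (cases "p < a")
    case False
    have "p * ?K \<le> a * ?K" using k kk by simp
    then have "p \<le> a" by (simp only: mult_le_cancel2)
    then have pa: "p = a" using False by simp
    then have "t = 0" using k kk by simp
    note pa this
    then show ?thesis using GP_pre_block[where M=M and p=a and a=a and h=h and j=j and l=l, OF assms(1) order.refl assms(2)] kk gs_01 by simp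
  next
    case True
    have gv: "gw ?g p \<in> {0,1,-1}" using gw_vals[of ?g p] assms(2) True by auto
    have "pre (\<lambda>i. GP M h i j l) k = pre (\<lambda>i. GP M h i j l) (p * ?K) + (\<Sum>r<t. GP M h (p * ?K + r) j l)"
      unfolding kk by (rule pre_add)
    also have "(\<Sum>r<t. GP M h (p * ?K + r) j l) = (\<Sum>r<t. Qp M h p r j l)"
    proof (rule sum.cong[OF refl])
      fix r assume "r \<in> {..<t}"
      then have r: "r < ?K" "r < 2*M" using t by auto
      show "GP M h (p * ?K + r) j l = Qp M h p r j l" using GP_block[OF r(1), of h p j l] r(2) by (simp only: if_True)
    qed
    finally have eq: "pre (\<lambda>i. GP M h i j l) k = gs ?g p + (\<Sum>r<t. Qp M h p r j l)"
      using GP_pre_block[where M=M and p=p and a=a and h=h and j=j and l=l, OF assms(1) _ assms(2)] True by simp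
    have "(\<Sum>r<t. Qp M h p r j l) \<in> {0, gw ?g p}" using Qp_sum(1)[where M=M and t=t and h=h and j=j and l=l and p=p, OF assms(1) _ gv] t by simp
    moreover have "gw ?g p \<noteq> 0 \<Longrightarrow> gs ?g p + gw ?g p \<in> {0,1}" using gw_ok[of ?g p] assms(2) True by auto
    ultimately show ?thesis
    proof (elim insertE)
      assume "(\<Sum>r<t. Qp M h p r j l) = 0" then show ?thesis using eq gs_01[of ?g p] by simp
    next
      assume s: "(\<Sum>r<t. Qp M h p r j l) = gw ?g p" and c: "gw ?g p \<noteq> 0 \<Longrightarrow> gs ?g p + gw ?g p \<in> {0,1}"
      show ?thesis
      proof (cases "gw ?g p = 0")
        case True then show ?thesis using eq s gs_01[of ?g p] by simp
      next
        case False then show ?thesis using eq s c by simp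
      qed
    qed simp
  qed
qed

lemma GP_line:
  assumes "i < a * Suc (2*M)"
  shows "\<exists>p r. p < a \<and> r < Suc (2*M) \<and> (\<forall>j l. GP M h i j l = (if r < 2*M then Qp M h p r j l else h p j l))"
proof -
  let ?K = "Suc (2*M)"
  define p where "p = i div ?K"
  define r where "r = i mod ?K"
  have i: "i = p * ?K + r" unfolding p_def r_def by (rule div_mult_mod_eq[symmetric])
  have r: "r < ?K" unfolding r_def by simp
  have p: "p < a" unfolding p_def using assms by (simp add: less_mult_imp_div_less)
  show ?thesis using p r GP_block[OF r] unfolding i by blast
qed

lemma Qp_single_j: "b \<le> M \<Longrightarrow> single b (\<lambda>j. Qp M h p r j l)"
  unfolding single_def
proof (intro allI impI)
  fix j j' assume a: "b \<le> M" "j < b" "j' < b" "Qp M h p r j l \<noteq> 0" "Qp M h p r j' l \<noteq> 0"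
  then have "(j + l) mod M = (j' + l) mod M" by (auto simp: Qp_def Let_def split: if_splits)
  then show "j = j'" using mod_inj[of j M j' l] a by simp
qed

lemma Qp_single_l: "c \<le> M \<Longrightarrow> single c (\<lambda>l. Qp M h p r j l)"
  unfolding single_def
proof (intro allI impI)
  fix l l' assume a: "c \<le> M" "l < c" "l' < c" "Qp M h p r j l \<noteq> 0" "Qp M h p r j l' \<noteq> 0"
  then have "(j + l) mod M = (j + l') mod M" by (auto simp: Qp_def Let_def split: if_splits)
  then show "l = l'" using mod_inj2[of l M l' j] a by simp
qed

lemma Qp_nonneg:
  assumes "gw (\<lambda>q. h q j l) p \<noteq> -1"
  shows "Qp M h p r j l \<in> {0,1}"
  using assms by (auto simp: Qp_def Let_def)

theorem pass1:
  assumes ent: "ent a b c h" and b: "1 \<le> b" and c: "1 \<le> c"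
  shows "\<exists>a' G. a \<le> a' \<and> reach (a,b,c,h) (a',b,c,G) \<and> ent a' b c G \<and> D1 POK a' b c G \<and>
    (\<forall>\<Phi>. D2 \<Phi> a b c h \<longrightarrow> D2 (\<lambda>n g. \<Phi> n g \<or> single n g) a' b c G) \<and>
    (\<forall>\<Phi>. D3 \<Phi> a b c h \<longrightarrow> D3 (\<lambda>n g. \<Phi> n g \<or> single n g) a' b c G) \<and>
    (D1 (\<lambda>n g. POK n g \<or> single n g) a b c h \<longrightarrow>
       (\<forall>\<Phi>. D2 \<Phi> a b c h \<longrightarrow> D2 (\<lambda>n g. \<Phi> n g \<or> POK n g) a' b c G) \<and>
       (\<forall>\<Phi>. D3 \<Phi> a b c h \<longrightarrow> D3 (\<lambda>n g. \<Phi> n g \<or> POK n g) a' b c G))"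
proof -
  define M where "M = max b c"
  have M0: "0 < M" and bM: "b \<le> M" and cM: "c \<le> M" using b c unfolding M_def by auto
  define a' where "a' = a * Suc (2*M)"
  define G where "G = GP M h"
  have R: "reach (a,b,c,h) (a',b,c,G)"
  proof -
    have "reach (a,b,c,h) (length (LP M a h), b, c, layf (LP M a h) h)"
    proof (rule layout[OF LP_isl])
      show "\<forall>x\<in>set (LP M a h). \<not> isl x \<longrightarrow> signed_subperm b c (projr x)"
        using LP_set[of _ M a h] Qp_subperm[OF bM cM] by fastforce
    qed
    moreover have "sim (length (LP M a h), b, c, layf (LP M a h) h) (a',b,c,G)"
      unfolding sim_iff LP_len a'_def G_def using layf_LP by auto
    ultimately show ?thesis by (rule reach_sim)
  qed
  have E: "ent a' b c G"
    unfolding ent_def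
  proof (intro allI impI)
    fix i j l assume i: "i < a'" and j: "j < b" and l: "l < c"
    obtain p r where pr: "p < a" "r < Suc (2*M)" "\<forall>j l. GP M h i j l = (if r < 2*M then Qp M h p r j l else h p j l)"
      using GP_line[of i a M h] i unfolding a'_def by blast
    show "G i j l \<in> {0,1,-1}"
    proof (cases "r < 2*M")
      case True then show ?thesis using pr Qp_vals[of M h p r j l] unfolding G_def by (auto split: if_splits)
    next
      case False then show ?thesis using pr ent j l unfolding G_def ent_def by auto
    qed
  qed
  have P1: "D1 POK a' b c G"
    unfolding D1_def G_def a'_def
  proof (intro allI impI)
    fix j l assume "j < b" "l < c"
    then have "\<forall>q<a. h q j l \<in> {0,1,-1}" using ent unfolding ent_def by auto
    then show "POK (a * Suc (2*M)) (\<lambda>i. GP M h i j l)" by (rule GP_POK[OF M0])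
  qed
  have P2: "D2 (\<lambda>n g. \<Phi> n g \<or> single n g) a' b c G" if "D2 \<Phi> a b c h" for \<Phi>
    unfolding D2_def
  proof (intro allI impI)
    fix i l assume i: "i < a'" and l: "l < c"
    obtain p r where pr: "p < a" "r < Suc (2*M)" "\<forall>j l. GP M h i j l = (if r < 2*M then Qp M h p r j l else h p j l)"
      using GP_line[of i a M h] i unfolding a'_def by blast
    show "\<Phi> b (\<lambda>j. G i j l) \<or> single b (\<lambda>j. G i j l)"
    proof (cases "r < 2*M")
      case True
      then have "(\<lambda>j. G i j l) = (\<lambda>j. Qp M h p r j l)" using pr unfolding G_def by auto
      then show ?thesis using Qp_single_j[OF bM] by simp
    next
      case False
      then have "(\<lambda>j. G i j l) = (\<lambda>j. h p j l)" using pr unfolding G_def by auto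
      then show ?thesis using that pr l unfolding D2_def by simp
    qed
  qed
  have P3: "D3 (\<lambda>n g. \<Phi> n g \<or> single n g) a' b c G" if "D3 \<Phi> a b c h" for \<Phi>
    unfolding D3_def
  proof (intro allI impI)
    fix i j assume i: "i < a'" and j: "j < b"
    obtain p r where pr: "p < a" "r < Suc (2*M)" "\<forall>j l. GP M h i j l = (if r < 2*M then Qp M h p r j l else h p j l)"
      using GP_line[of i a M h] i unfolding a'_def by blast
    show "\<Phi> c (\<lambda>l. G i j l) \<or> single c (\<lambda>l. G i j l)"
    proof (cases "r < 2*M")
      case True
      then have "(\<lambda>l. G i j l) = (\<lambda>l. Qp M h p r j l)" using pr unfolding G_def by auto
      then show ?thesis using Qp_single_l[OF cM] by simp
    next
      case False
      then have "(\<lambda>l. G i j l) = (\<lambda>l. h p j l)" using pr unfolding G_def by auto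
      then show ?thesis using that pr j unfolding D3_def by simp
    qed
  qed
  have PP: "(\<forall>\<Phi>. D2 \<Phi> a b c h \<longrightarrow> D2 (\<lambda>n g. \<Phi> n g \<or> POK n g) a' b c G) \<and>
       (\<forall>\<Phi>. D3 \<Phi> a b c h \<longrightarrow> D3 (\<lambda>n g. \<Phi> n g \<or> POK n g) a' b c G)"
    if PS: "D1 (\<lambda>n g. POK n g \<or> single n g) a b c h"
  proof -
    have nn: "gw (\<lambda>q. h q j l) p \<noteq> -1" if "j < b" "l < c" "p < a" for j l p
    proof (rule PS_no_neg)
      show "POK a (\<lambda>q. h q j l) \<or> single a (\<lambda>q. h q j l)" using PS that unfolding D1_def by auto
      show "p < a" by fact
      show "\<forall>q<a. h q j l \<in> {0,1,-1}" using ent that unfolding ent_def by auto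
    qed
    have A2: "D2 (\<lambda>n g. \<Phi> n g \<or> POK n g) a' b c G" if "D2 \<Phi> a b c h" for \<Phi>
      unfolding D2_def
    proof (intro allI impI)
      fix i l assume i: "i < a'" and l: "l < c"
      obtain p r where pr: "p < a" "r < Suc (2*M)" "\<forall>j l. GP M h i j l = (if r < 2*M then Qp M h p r j l else h p j l)"
        using GP_line[of i a M h] i unfolding a'_def by blast
      show "\<Phi> b (\<lambda>j. G i j l) \<or> POK b (\<lambda>j. G i j l)"
      proof (cases "r < 2*M")
        case True
        then have eq: "(\<lambda>j. G i j l) = (\<lambda>j. Qp M h p r j l)" using pr unfolding G_def by auto
        have "POK b (\<lambda>j. Qp M h p r j l)"
        proof (rule single_POK)
          show "single b (\<lambda>j. Qp M h p r j l)" using Qp_single_j[OF bM] .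
          show "\<forall>i<b. Qp M h p r i l \<in> {0,1}" using Qp_nonneg nn l pr(1) by blast
        qed
        then show ?thesis using eq by simp
      next
        case False
        then have "(\<lambda>j. G i j l) = (\<lambda>j. h p j l)" using pr unfolding G_def by auto
        then show ?thesis using that pr l unfolding D2_def by simp
      qed
    qed
    have A3: "D3 (\<lambda>n g. \<Phi> n g \<or> POK n g) a' b c G" if "D3 \<Phi> a b c h" for \<Phi>
      unfolding D3_def
    proof (intro allI impI)
      fix i j assume i: "i < a'" and j: "j < b"
      obtain p r where pr: "p < a" "r < Suc (2*M)" "\<forall>j l. GP M h i j l = (if r < 2*M then Qp M h p r j l else h p j l)"
        using GP_line[of i a M h] i unfolding a'_def by blast
      show "\<Phi> c (\<lambda>l. G i j l) \<or> POK c (\<lambda>l. G i j l)"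
      proof (cases "r < 2*M")
        case True
        then have eq: "(\<lambda>l. G i j l) = (\<lambda>l. Qp M h p r j l)" using pr unfolding G_def by auto
        have "POK c (\<lambda>l. Qp M h p r j l)"
        proof (rule single_POK)
          show "single c (\<lambda>l. Qp M h p r j l)" using Qp_single_l[OF cM] .
          show "\<forall>i<c. Qp M h p r j i \<in> {0,1}" using Qp_nonneg nn j pr(1) by blast
        qed
        then show ?thesis using eq by simp
      next
        case False
        then have "(\<lambda>l. G i j l) = (\<lambda>l. h p j l)" using pr unfolding G_def by auto
        then show ?thesis using that pr j unfolding D3_def by simp
      qed
    qed
    show ?thesis using A2 A3 by blast
  qed
  have "a \<le> a'" unfolding a'_def by simp
  then show ?thesis using R E P1 P2 P3 PP by blast
qed

lemma D1_mono: "D1 \<Phi> a b c h \<Longrightarrow> (\<And>n g. \<Phi> n g \<Longrightarrow> \<Psi> n g) \<Longrightarrow> D1 \<Psi> a b c h"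
  unfolding D1_def by blast
lemma D2_mono: "D2 \<Phi> a b c h \<Longrightarrow> (\<And>n g. \<Phi> n g \<Longrightarrow> \<Psi> n g) \<Longrightarrow> D2 \<Psi> a b c h"
  unfolding D2_def by blast
lemma D3_mono: "D3 \<Phi> a b c h \<Longrightarrow> (\<And>n g. \<Phi> n g \<Longrightarrow> \<Psi> n g) \<Longrightarrow> D3 \<Psi> a b c h"
  unfolding D3_def by blast

lemma D2_sw12: "D2 \<Phi> a b c (sw12 G) = D1 \<Phi> b a c G" by (auto simp: D1_def D2_def sw12_def)
lemma D1_sw12: "D1 \<Phi> a b c (sw12 G) = D2 \<Phi> b a c G" by (auto simp: D1_def D2_def sw12_def)
lemma D3_sw12: "D3 \<Phi> a b c (sw12 G) = D3 \<Phi> b a c G" by (auto simp: D3_def sw12_def)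
lemma D3_sw13: "D3 \<Phi> a b c (sw13 G) = D1 \<Phi> c b a G" by (auto simp: D1_def D3_def sw13_def)
lemma D1_sw13: "D1 \<Phi> a b c (sw13 G) = D3 \<Phi> c b a G" by (auto simp: D1_def D3_def sw13_def)
lemma D2_sw13: "D2 \<Phi> a b c (sw13 G) = D2 \<Phi> c b a G" by (auto simp: D2_def sw13_def)
lemma ent_sw12: "ent a b c (sw12 G) = ent b a c G" by (auto simp: ent_def sw12_def)
lemma ent_sw13: "ent a b c (sw13 G) = ent c b a G" by (auto simp: ent_def sw13_def)

theorem pass2:
  assumes ent: "ent a b c h" and a: "1 \<le> a" and c: "1 \<le> c"
  shows "\<exists>b' G. b \<le> b' \<and> reach (a,b,c,h) (a,b',c,G) \<and> ent a b' c G \<and> D2 POK a b' c G \<and>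
    (\<forall>\<Phi>. D1 \<Phi> a b c h \<longrightarrow> D1 (\<lambda>n g. \<Phi> n g \<or> single n g) a b' c G) \<and>
    (\<forall>\<Phi>. D3 \<Phi> a b c h \<longrightarrow> D3 (\<lambda>n g. \<Phi> n g \<or> single n g) a b' c G) \<and>
    (D2 (\<lambda>n g. POK n g \<or> single n g) a b c h \<longrightarrow>
       (\<forall>\<Phi>. D1 \<Phi> a b c h \<longrightarrow> D1 (\<lambda>n g. \<Phi> n g \<or> POK n g) a b' c G) \<and>
       (\<forall>\<Phi>. D3 \<Phi> a b c h \<longrightarrow> D3 (\<lambda>n g. \<Phi> n g \<or> POK n g) a b' c G))"
proof -
  have "ent b a c (sw12 h)" using ent by simp
  from pass1[OF this a c] obtain b' G where G: "b \<le> b'" "reach (b,a,c,sw12 h) (b',a,c,G)" "ent b' a c G" "D1 POK b' a c G"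
    "\<forall>\<Phi>. D2 \<Phi> b a c (sw12 h) \<longrightarrow> D2 (\<lambda>n g. \<Phi> n g \<or> single n g) b' a c G"
    "\<forall>\<Phi>. D3 \<Phi> b a c (sw12 h) \<longrightarrow> D3 (\<lambda>n g. \<Phi> n g \<or> single n g) b' a c G"
    "D1 (\<lambda>n g. POK n g \<or> single n g) b a c (sw12 h) \<longrightarrow>
       (\<forall>\<Phi>. D2 \<Phi> b a c (sw12 h) \<longrightarrow> D2 (\<lambda>n g. \<Phi> n g \<or> POK n g) b' a c G) \<and>
       (\<forall>\<Phi>. D3 \<Phi> b a c (sw12 h) \<longrightarrow> D3 (\<lambda>n g. \<Phi> n g \<or> POK n g) b' a c G)"
    by (elim exE conjE) (rule that; assumption)
  have R: "reach (a,b,c,h) (a,b',c,sw12 G)"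
  proof -
    have "reach (b,a,c,sw12 h) (b',a,c,sw12 (sw12 G))" using G(2) by simp
    then show ?thesis by (rule reach12)
  qed
  have "ent a b' c (sw12 G)" using G(3) unfolding ent_sw12 .
  moreover have "D2 POK a b' c (sw12 G)" using G(4) unfolding D2_sw12 .
  moreover have "\<forall>\<Phi>. D1 \<Phi> a b c h \<longrightarrow> D1 (\<lambda>n g. \<Phi> n g \<or> single n g) a b' c (sw12 G)"
    using G(5) unfolding D1_sw12 D2_sw12 sw12_sw12 .
  moreover have "\<forall>\<Phi>. D3 \<Phi> a b c h \<longrightarrow> D3 (\<lambda>n g. \<Phi> n g \<or> single n g) a b' c (sw12 G)"
    using G(6) unfolding D3_sw12 sw12_sw12 .
  moreover have "D2 (\<lambda>n g. POK n g \<or> single n g) a b c h \<longrightarrow>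
       (\<forall>\<Phi>. D1 \<Phi> a b c h \<longrightarrow> D1 (\<lambda>n g. \<Phi> n g \<or> POK n g) a b' c (sw12 G)) \<and>
       (\<forall>\<Phi>. D3 \<Phi> a b c h \<longrightarrow> D3 (\<lambda>n g. \<Phi> n g \<or> POK n g) a b' c (sw12 G))"
    using G(7) unfolding D1_sw12 D2_sw12 D3_sw12 sw12_sw12 .
  ultimately show ?thesis using G(1) R by blast
qed

theorem pass3:
  assumes ent: "ent a b c h" and a: "1 \<le> a" and b: "1 \<le> b"
  shows "\<exists>c' G. c \<le> c' \<and> reach (a,b,c,h) (a,b,c',G) \<and> ent a b c' G \<and> D3 POK a b c' G \<and>
    (\<forall>\<Phi>. D1 \<Phi> a b c h \<longrightarrow> D1 (\<lambda>n g. \<Phi> n g \<or> single n g) a b c' G) \<and>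
    (\<forall>\<Phi>. D2 \<Phi> a b c h \<longrightarrow> D2 (\<lambda>n g. \<Phi> n g \<or> single n g) a b c' G) \<and>
    (D3 (\<lambda>n g. POK n g \<or> single n g) a b c h \<longrightarrow>
       (\<forall>\<Phi>. D1 \<Phi> a b c h \<longrightarrow> D1 (\<lambda>n g. \<Phi> n g \<or> POK n g) a b c' G) \<and>
       (\<forall>\<Phi>. D2 \<Phi> a b c h \<longrightarrow> D2 (\<lambda>n g. \<Phi> n g \<or> POK n g) a b c' G))"
proof -
  have "ent c b a (sw13 h)" using ent by simp
  from pass1[OF this b a] obtain c' G where G: "c \<le> c'" "reach (c,b,a,sw13 h) (c',b,a,G)" "ent c' b a G" "D1 POK c' b a G"
    "\<forall>\<Phi>. D2 \<Phi> c b a (sw13 h) \<longrightarrow> D2 (\<lambda>n g. \<Phi> n g \<or> single n g) c' b a G"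
    "\<forall>\<Phi>. D3 \<Phi> c b a (sw13 h) \<longrightarrow> D3 (\<lambda>n g. \<Phi> n g \<or> single n g) c' b a G"
    "D1 (\<lambda>n g. POK n g \<or> single n g) c b a (sw13 h) \<longrightarrow>
       (\<forall>\<Phi>. D2 \<Phi> c b a (sw13 h) \<longrightarrow> D2 (\<lambda>n g. \<Phi> n g \<or> POK n g) c' b a G) \<and>
       (\<forall>\<Phi>. D3 \<Phi> c b a (sw13 h) \<longrightarrow> D3 (\<lambda>n g. \<Phi> n g \<or> POK n g) c' b a G)"
    by (elim exE conjE) (rule that; assumption)
  have R: "reach (a,b,c,h) (a,b,c',sw13 G)"
  proof -
    have "reach (c,b,a,sw13 h) (c',b,a,sw13 (sw13 G))" using G(2) by simp
    then show ?thesis by (rule reach13)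
  qed
  have "ent a b c' (sw13 G)" using G(3) unfolding ent_sw13 .
  moreover have "D3 POK a b c' (sw13 G)" using G(4) unfolding D3_sw13 .
  moreover have "\<forall>\<Phi>. D1 \<Phi> a b c h \<longrightarrow> D1 (\<lambda>n g. \<Phi> n g \<or> single n g) a b c' (sw13 G)"
    using G(6) unfolding D1_sw13 D3_sw13 sw13_sw13 .
  moreover have "\<forall>\<Phi>. D2 \<Phi> a b c h \<longrightarrow> D2 (\<lambda>n g. \<Phi> n g \<or> single n g) a b c' (sw13 G)"
    using G(5) unfolding D2_sw13 sw13_sw13 .
  moreover have "D3 (\<lambda>n g. POK n g \<or> single n g) a b c h \<longrightarrow>
       (\<forall>\<Phi>. D1 \<Phi> a b c h \<longrightarrow> D1 (\<lambda>n g. \<Phi> n g \<or> POK n g) a b c' (sw13 G)) \<and>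
       (\<forall>\<Phi>. D2 \<Phi> a b c h \<longrightarrow> D2 (\<lambda>n g. \<Phi> n g \<or> POK n g) a b c' (sw13 G))"
    using G(7) unfolding D1_sw13 D2_sw13 D3_sw13 sw13_sw13 by blast
  ultimately show ?thesis using G(1) R by blast
qed

abbreviation PS where "PS \<equiv> (\<lambda>n g. POK n g \<or> single n g)"

theorem stage1:
  assumes ent: "ent m n k A" and m: "1 \<le> m" and n: "1 \<le> n" and k: "1 \<le> k"
  shows "\<exists>a b c G. m \<le> a \<and> n \<le> b \<and> k \<le> c \<and> reach (m,n,k,A) (a,b,c,G) \<and> ent a b c G \<and>
     D1 POK a b c G \<and> D2 POK a b c G \<and> D3 POK a b c G"
proof -
  have T2: "D2 (\<lambda>n g. True) m n k A" and T3: "D3 (\<lambda>n g. True) m n k A" by (auto simp: D2_def D3_def)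
  obtain a1 G1 where s1: "m \<le> a1" "reach (m,n,k,A) (a1,n,k,G1)" "ent a1 n k G1" "D1 POK a1 n k G1"
    "\<forall>\<Phi>. D2 \<Phi> m n k A \<longrightarrow> D2 (\<lambda>n g. \<Phi> n g \<or> single n g) a1 n k G1"
    "\<forall>\<Phi>. D3 \<Phi> m n k A \<longrightarrow> D3 (\<lambda>n g. \<Phi> n g \<or> single n g) a1 n k G1"
    using pass1[OF ent n k] by (elim exE conjE) (rule that; assumption)
  have a1: "1 \<le> a1" using s1(1) m by simp
  have t3: "D3 (\<lambda>n g. True) a1 n k G1" by (auto simp: D3_def)
  obtain b2 G2 where s2: "n \<le> b2" "reach (a1,n,k,G1) (a1,b2,k,G2)" "ent a1 b2 k G2" "D2 POK a1 b2 k G2"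
    "\<forall>\<Phi>. D1 \<Phi> a1 n k G1 \<longrightarrow> D1 (\<lambda>n g. \<Phi> n g \<or> single n g) a1 b2 k G2"
    using pass2[OF s1(3) a1 k] by (elim exE conjE) (rule that; assumption)
  have b2: "1 \<le> b2" using s2(1) n by simp
  have d1_2: "D1 PS a1 b2 k G2" using s2(5)[rule_format, OF s1(4)] .
  obtain c3 G3 where s3: "k \<le> c3" "reach (a1,b2,k,G2) (a1,b2,c3,G3)" "ent a1 b2 c3 G3" "D3 POK a1 b2 c3 G3"
    "\<forall>\<Phi>. D1 \<Phi> a1 b2 k G2 \<longrightarrow> D1 (\<lambda>n g. \<Phi> n g \<or> single n g) a1 b2 c3 G3"
    "\<forall>\<Phi>. D2 \<Phi> a1 b2 k G2 \<longrightarrow> D2 (\<lambda>n g. \<Phi> n g \<or> single n g) a1 b2 c3 G3"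
    using pass3[OF s2(3) a1 b2] by (elim exE conjE) (rule that; assumption)
  have c3: "1 \<le> c3" using s3(1) k by simp
  have d1_3: "D1 PS a1 b2 c3 G3"
    by (rule D1_mono[OF s3(5)[rule_format, OF d1_2]]) auto
  have d2_3: "D2 PS a1 b2 c3 G3"
    using s3(6)[rule_format, OF s2(4)] .
  obtain a4 G4 where s4: "a1 \<le> a4" "reach (a1,b2,c3,G3) (a4,b2,c3,G4)" "ent a4 b2 c3 G4" "D1 POK a4 b2 c3 G4"
    "D1 PS a1 b2 c3 G3 \<longrightarrow>
       (\<forall>\<Phi>. D2 \<Phi> a1 b2 c3 G3 \<longrightarrow> D2 (\<lambda>n g. \<Phi> n g \<or> POK n g) a4 b2 c3 G4) \<and>
       (\<forall>\<Phi>. D3 \<Phi> a1 b2 c3 G3 \<longrightarrow> D3 (\<lambda>n g. \<Phi> n g \<or> POK n g) a4 b2 c3 G4)"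
    using pass1[OF s3(3) b2 c3] by (elim exE conjE) (rule that; assumption)
  have a4: "1 \<le> a4" using s4(1) a1 by simp
  note X4 = mp[OF s4(5) d1_3]
  have d2_4: "D2 PS a4 b2 c3 G4"
    by (rule D2_mono[OF X4[THEN conjunct1, rule_format, OF d2_3]]) auto
  have d3_4: "D3 POK a4 b2 c3 G4"
    by (rule D3_mono[OF X4[THEN conjunct2, rule_format, OF s3(4)]]) auto
  obtain b5 G5 where s5: "b2 \<le> b5" "reach (a4,b2,c3,G4) (a4,b5,c3,G5)" "ent a4 b5 c3 G5" "D2 POK a4 b5 c3 G5"
    "D2 PS a4 b2 c3 G4 \<longrightarrow>
       (\<forall>\<Phi>. D1 \<Phi> a4 b2 c3 G4 \<longrightarrow> D1 (\<lambda>n g. \<Phi> n g \<or> POK n g) a4 b5 c3 G5) \<and>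
       (\<forall>\<Phi>. D3 \<Phi> a4 b2 c3 G4 \<longrightarrow> D3 (\<lambda>n g. \<Phi> n g \<or> POK n g) a4 b5 c3 G5)"
    using pass2[OF s4(3) a4 c3] by (elim exE conjE) (rule that; assumption)
  note X5 = mp[OF s5(5) d2_4]
  have d1_5: "D1 POK a4 b5 c3 G5"
    by (rule D1_mono[OF X5[THEN conjunct1, rule_format, OF s4(4)]]) auto
  have d3_5: "D3 POK a4 b5 c3 G5"
    by (rule D3_mono[OF X5[THEN conjunct2, rule_format, OF d3_4]]) auto
  have R: "reach (m,n,k,A) (a4,b5,c3,G5)"
    using s1(2) s2(2) s3(2) s4(2) s5(2) by (meson reach_trans)
  show ?thesis
    apply (rule exI[of _ a4], rule exI[of _ b5], rule exI[of _ c3], rule exI[of _ G5])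
    using s1(1) s4(1) s2(1) s5(1) s3(1) R s5(3) d1_5 s5(4) d3_5 by simp
qed

theorem hall:
  fixes A :: "'a set" and N :: "'a \<Rightarrow> 'b set"
  assumes "finite A" "\<forall>a\<in>A. finite (N a)" "\<forall>S\<subseteq>A. card S \<le> card (\<Union>(N ` S))"
  shows "\<exists>f. (\<forall>a\<in>A. f a \<in> N a) \<and> inj_on f A"
  using assms
proof (induction "card A" arbitrary: A N rule: less_induct)
  case less
  show ?case
  proof (cases "A = {}")
    case True then show ?thesis by auto
  next
    case Ane: False
    show ?thesis
    proof (cases "\<exists>S. S \<subseteq> A \<and> S \<noteq> {} \<and> S \<noteq> A \<and> card (\<Union>(N ` S)) = card S")
      case True
      then obtain S where S: "S \<subseteq> A" "S \<noteq> {}" "S \<noteq> A" "card (\<Union>(N ` S)) = card S" by blast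
      have fS: "finite S" using S(1) less.prems(1) finite_subset by blast
      have cS: "card S < card A" using S(1,3) less.prems(1) psubset_card_mono by blast
      have HS: "\<forall>T\<subseteq>S. card T \<le> card (\<Union>(N ` T))" using less.prems(3) S(1) by auto
      obtain f1 where f1: "\<forall>a\<in>S. f1 a \<in> N a" "inj_on f1 S"
        using less.hyps[OF cS fS _ HS] less.prems(2) S(1) by blast
      define A2 where "A2 = A - S"
      define NS where "NS = \<Union>(N ` S)"
      define N2 where "N2 = (\<lambda>a. N a - NS)"
      have fNS: "finite NS" unfolding NS_def using fS less.prems(2) S(1) by auto
      have fA2: "finite A2" unfolding A2_def using less.prems(1) by simp
      have "card S > 0" using fS S(2) by (simp add: card_gt_0_iff)
      moreover have "card A2 = card A - card S" unfolding A2_def using card_Diff_subset[OF fS S(1)] .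
      moreover have "card S \<le> card A" using card_mono[OF less.prems(1) S(1)] .
      ultimately have cA2: "card A2 < card A" using cS by linarith
      have H2: "\<forall>T\<subseteq>A2. card T \<le> card (\<Union>(N2 ` T))"
      proof (intro allI impI)
        fix T assume T: "T \<subseteq> A2"
        have fT: "finite T" using T fA2 finite_subset by blast
        have TS: "T \<inter> S = {}" using T unfolding A2_def by auto
        have TSA: "T \<union> S \<subseteq> A" using T S(1) unfolding A2_def by auto
        have U: "\<Union>(N2 ` T) = \<Union>(N ` (T \<union> S)) - NS" unfolding N2_def NS_def by auto
        have fU: "finite (\<Union>(N ` (T \<union> S)))" using TSA less.prems(1,2) finite_subset fT fS by auto
        have sub: "NS \<subseteq> \<Union>(N ` (T \<union> S))" unfolding NS_def by auto
        have "card (\<Union>(N2 ` T)) = card (\<Union>(N ` (T \<union> S))) - card NS"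
          unfolding U using card_Diff_subset[OF fNS sub] .
        moreover have "card (T \<union> S) \<le> card (\<Union>(N ` (T \<union> S)))" using less.prems(3) TSA by blast
        moreover have "card (T \<union> S) = card T + card S" using card_Un_disjoint[OF fT fS TS] .
        moreover have "card NS = card S" using S(4) unfolding NS_def .
        ultimately show "card T \<le> card (\<Union>(N2 ` T))" by linarith
      qed
      have fN2: "\<forall>a\<in>A2. finite (N2 a)" using less.prems(2) unfolding N2_def A2_def by auto
      obtain f2 where f2: "\<forall>a\<in>A2. f2 a \<in> N2 a" "inj_on f2 A2"
        using less.hyps[OF cA2 fA2 fN2 H2] by blast
      define f where "f = (\<lambda>a. if a \<in> S then f1 a else f2 a)"
      have "\<forall>a\<in>A. f a \<in> N a" using f1 f2 unfolding f_def A2_def N2_def by auto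
      moreover have "inj_on f A"
      proof (rule inj_onI)
        fix x y assume x: "x \<in> A" and y: "y \<in> A" and e: "f x = f y"
        show "x = y"
        proof (cases "x \<in> S"; cases "y \<in> S")
          assume "x \<in> S" "y \<in> S" then show ?thesis using e f1(2) unfolding f_def by (auto dest: inj_onD)
        next
          assume xs: "x \<in> S" "y \<notin> S"
          then have "f x \<in> NS" using f1 unfolding f_def NS_def by auto
          moreover have "f y \<notin> NS" using xs y f2 unfolding f_def N2_def A2_def by auto
          ultimately show ?thesis using e by simp
        next
          assume xs: "x \<notin> S" "y \<in> S"
          then have "f y \<in> NS" using f1 unfolding f_def NS_def by auto
          moreover have "f x \<notin> NS" using xs x f2 unfolding f_def N2_def A2_def by auto
          ultimately show ?thesis using e by simp
        next
          assume "x \<notin> S" "y \<notin> S" then show ?thesis using e f2(2) x y unfolding f_def A2_def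
            by (auto dest: inj_onD)
        qed
      qed
      ultimately show ?thesis by blast
    next
      case False
      obtain a where a: "a \<in> A" using Ane by blast
      have "card {a} \<le> card (\<Union>(N ` {a}))" using less.prems(3) a by blast
      then have "card (N a) \<ge> 1" by simp
      then have "N a \<noteq> {}" by auto
      then obtain b where b: "b \<in> N a" by blast
      define A' where "A' = A - {a}"
      define N' where "N' = (\<lambda>x. N x - {b})"
      have fA': "finite A'" unfolding A'_def using less.prems(1) by simp
      have cA': "card A' < card A" unfolding A'_def using less.prems(1) a by (rule card_Diff1_less)
      have fN': "\<forall>x\<in>A'. finite (N' x)" using less.prems(2) unfolding N'_def A'_def by auto
      have H': "\<forall>T\<subseteq>A'. card T \<le> card (\<Union>(N' ` T))"
      proof (intro allI impI)
        fix T assume T: "T \<subseteq> A'"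
        show "card T \<le> card (\<Union>(N' ` T))"
        proof (cases "T = {}")
          case True then show ?thesis by simp
        next
          case Tne: False
          have TA: "T \<subseteq> A" "T \<noteq> A" using T a unfolding A'_def by auto
          have fT: "finite T" using T fA' finite_subset by blast
          have fU: "finite (\<Union>(N ` T))" using TA(1) less.prems(2) fT by auto
          have ge: "card T \<le> card (\<Union>(N ` T))" using less.prems(3) TA(1) by blast
          have ne: "card (\<Union>(N ` T)) \<noteq> card T" using False TA Tne by blast
          have U: "\<Union>(N' ` T) = \<Union>(N ` T) - {b}" unfolding N'_def by auto
          have "card (\<Union>(N ` T)) - 1 \<le> card (\<Union>(N ` T) - {b})"
            using fU by (simp add: card_Diff_singleton_if)
          then show ?thesis unfolding U using ge ne by linarith
        qed
      qed
      obtain f' where f': "\<forall>x\<in>A'. f' x \<in> N' x" "inj_on f' A'"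
        using less.hyps[OF cA' fA' fN' H'] by blast
      define f where "f = (\<lambda>x. if x = a then b else f' x)"
      have "\<forall>x\<in>A. f x \<in> N x" using f' b unfolding f_def N'_def A'_def by auto
      moreover have "inj_on f A"
      proof (rule inj_onI)
        fix x y assume x: "x \<in> A" and y: "y \<in> A" and e: "f x = f y"
        show "x = y"
        proof (cases "x = a"; cases "y = a")
          assume "x = a" "y = a" then show ?thesis by simp
        next
          assume xy: "x = a" "y \<noteq> a"
          then have "f y \<noteq> b" using f' y unfolding f_def N'_def A'_def by auto
          then show ?thesis using e xy unfolding f_def by simp
        next
          assume xy: "x \<noteq> a" "y = a"
          then have "f x \<noteq> b" using f' x unfolding f_def N'_def A'_def by auto
          then show ?thesis using e xy unfolding f_def by simp
        next
          assume xy: "x \<noteq> a" "y \<noteq> a"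
          then show ?thesis using e f'(2) x y unfolding f_def A'_def by (auto dest: inj_onD)
        qed
      qed
      ultimately show ?thesis by blast
    qed
  qed
qed

lemma card_filter_sum: "finite U \<Longrightarrow> card {x\<in>U. P x} = (\<Sum>x\<in>U. if P x then 1 else 0::nat)"
  by (simp add: sum.inter_filter[symmetric])

lemma regular_pm:
  fixes E :: "nat \<Rightarrow> nat \<Rightarrow> bool"
  assumes k: "0 < k" and R: "\<forall>r<n. card {c. c < n \<and> E r c} = k" and C: "\<forall>c<n. card {r. r < n \<and> E r c} = k"
  shows "\<exists>\<tau>. (\<forall>r<n. \<tau> r < n \<and> E r (\<tau> r)) \<and> inj_on \<tau> {..<n}"
proof -
  define N where "N = (\<lambda>r. {c. c < n \<and> E r c})"
  have H: "\<forall>S\<subseteq>{..<n}. card S \<le> card (\<Union>(N ` S))"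
  proof (intro allI impI)
    fix S assume S: "S \<subseteq> {..<n}"
    define U where "U = \<Union>(N ` S)"
    have fS: "finite S" using S finite_subset by blast
    have Un: "U \<subseteq> {..<n}" unfolding U_def N_def by auto
    have fU: "finite U" using Un finite_subset by blast
    have "k * card S = (\<Sum>r\<in>S. k)" by simp
    also have "\<dots> = (\<Sum>r\<in>S. card (N r))"
      by (rule sum.cong[OF refl]) (use R S in \<open>auto simp: N_def\<close>)
    also have "\<dots> = (\<Sum>r\<in>S. \<Sum>c\<in>U. if E r c then 1 else 0)"
    proof (rule sum.cong[OF refl])
      fix r assume r: "r \<in> S"
      have "N r = {c\<in>U. E r c}" unfolding U_def N_def using r by auto
      then show "card (N r) = (\<Sum>c\<in>U. if E r c then 1 else 0)" using card_filter_sum[OF fU] by simp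
    qed
    also have "\<dots> = (\<Sum>c\<in>U. \<Sum>r\<in>S. if E r c then 1 else 0)" by (rule sum.swap)
    also have "\<dots> \<le> (\<Sum>c\<in>U. k)"
    proof (rule sum_mono)
      fix c assume c: "c \<in> U"
      have "(\<Sum>r\<in>S. if E r c then 1 else 0) = card {r\<in>S. E r c}" using card_filter_sum[OF fS] by simp
      also have "\<dots> \<le> card {r. r < n \<and> E r c}" by (rule card_mono) (use S in auto)
      also have "\<dots> = k" using C c Un by auto
      finally show "(\<Sum>r\<in>S. if E r c then 1 else 0) \<le> k" .
    qed
    also have "\<dots> = k * card U" by simp
    finally have "k * card S \<le> k * card U" .
    then show "card S \<le> card (\<Union>(N ` S))" using k unfolding U_def by simp
  qed
  have "\<exists>f. (\<forall>a\<in>{..<n}. f a \<in> N a) \<and> inj_on f {..<n}"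
    by (rule hall) (use H in \<open>auto simp: N_def\<close>)
  then show ?thesis unfolding N_def by auto
qed

theorem regular_decomp:
  fixes E :: "nat \<Rightarrow> nat \<Rightarrow> bool"
  assumes "\<forall>r<n. card {c. c < n \<and> E r c} = k" "\<forall>c<n. card {r. r < n \<and> E r c} = k"
  shows "\<exists>\<sigma>. (\<forall>i<k. \<forall>r<n. \<sigma> i r < n \<and> E r (\<sigma> i r)) \<and> (\<forall>i<k. inj_on (\<sigma> i) {..<n}) \<and>
     (\<forall>r<n. \<forall>c<n. E r c \<longrightarrow> (\<exists>!i. i < k \<and> \<sigma> i r = c))"
  using assms
proof (induction k arbitrary: E)
  case 0
  have "\<not> E r c" if "r < n" "c < n" for r c
  proof
    assume "E r c"
    then have "c \<in> {c. c < n \<and> E r c}" using that by simp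
    moreover have "finite {c. c < n \<and> E r c}" by simp
    ultimately have "card {c. c < n \<and> E r c} > 0" using card_gt_0_iff by blast
    then show False using 0 that by simp
  qed
  then show ?case by auto
next
  case (Suc k)
  obtain \<tau> where tau: "\<forall>r<n. \<tau> r < n \<and> E r (\<tau> r)" "inj_on \<tau> {..<n}"
    using regular_pm[of "Suc k" n E] Suc.prems by auto
  have surj: "\<tau> ` {..<n} = {..<n}"
    by (rule endo_inj_surj) (use tau in auto)
  define E' where "E' = (\<lambda>r c. E r c \<and> \<tau> r \<noteq> c)"
  have R': "\<forall>r<n. card {c. c < n \<and> E' r c} = k"
  proof (intro allI impI)
    fix r assume r: "r < n"
    have "{c. c < n \<and> E' r c} = {c. c < n \<and> E r c} - {\<tau> r}" unfolding E'_def by auto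
    moreover have "\<tau> r \<in> {c. c < n \<and> E r c}" using tau r by auto
    ultimately show "card {c. c < n \<and> E' r c} = k" using Suc.prems(1) r by simp
  qed
  have C': "\<forall>c<n. card {r. r < n \<and> E' r c} = k"
  proof (intro allI impI)
    fix c assume c: "c < n"
    obtain r0 where r0: "r0 < n" "\<tau> r0 = c" using surj c by (metis imageE lessThan_iff)
    have "{r. r < n \<and> E' r c} = {r. r < n \<and> E r c} - {r0}"
      unfolding E'_def using r0 tau(2) by (auto dest: inj_onD)
    moreover have "r0 \<in> {r. r < n \<and> E r c}" using tau r0 by auto
    ultimately show "card {r. r < n \<and> E' r c} = k" using Suc.prems(2) c by simp
  qed
  obtain \<sigma>' where s': "\<forall>i<k. \<forall>r<n. \<sigma>' i r < n \<and> E' r (\<sigma>' i r)" "\<forall>i<k. inj_on (\<sigma>' i) {..<n}"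
    "\<forall>r<n. \<forall>c<n. E' r c \<longrightarrow> (\<exists>!i. i < k \<and> \<sigma>' i r = c)"
    using Suc.IH[OF R' C'] by blast
  define \<sigma> where "\<sigma> = (\<lambda>i. if i = k then \<tau> else \<sigma>' i)"
  have P1: "\<forall>i<Suc k. \<forall>r<n. \<sigma> i r < n \<and> E r (\<sigma> i r)"
    using tau s'(1) unfolding \<sigma>_def E'_def by (auto simp: less_Suc_eq)
  have P2: "\<forall>i<Suc k. inj_on (\<sigma> i) {..<n}"
    using tau s'(2) unfolding \<sigma>_def by (auto simp: less_Suc_eq)
  have P3: "\<forall>r<n. \<forall>c<n. E r c \<longrightarrow> (\<exists>!i. i < Suc k \<and> \<sigma> i r = c)"
  proof (intro allI impI)
    fix r c assume r: "r < n" and c: "c < n" and e: "E r c"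
    show "\<exists>!i. i < Suc k \<and> \<sigma> i r = c"
    proof (cases "\<tau> r = c")
      case True
      show ?thesis
      proof (rule ex1I[of _ k])
        show "k < Suc k \<and> \<sigma> k r = c" using True unfolding \<sigma>_def by simp
      next
        fix i assume i: "i < Suc k \<and> \<sigma> i r = c"
        show "i = k"
        proof (rule ccontr)
          assume "i \<noteq> k"
          then have "i < k" "\<sigma>' i r = c" using i unfolding \<sigma>_def by auto
          then have "E' r c" using s'(1) r by auto
          then show False using True unfolding E'_def by simp
        qed
      qed
    next
      case False
      then have "E' r c" using e unfolding E'_def by simp
      then obtain i where i: "i < k" "\<sigma>' i r = c" and u: "\<forall>i'. i' < k \<and> \<sigma>' i' r = c \<longrightarrow> i' = i"
        using s'(3) r c by metis
      show ?thesis
      proof (rule ex1I[of _ i])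
        show "i < Suc k \<and> \<sigma> i r = c" using i unfolding \<sigma>_def by simp
      next
        fix i' assume i': "i' < Suc k \<and> \<sigma> i' r = c"
        show "i' = i"
        proof (cases "i' = k")
          case True then show ?thesis using i' False unfolding \<sigma>_def by simp
        next
          case False2: False
          then show ?thesis using i' u unfolding \<sigma>_def by auto
        qed
      qed
    qed
  qed
  show ?case using P1 P2 P3 by blast
qed

lemma pre_cong: "(\<forall>i<k. f i = g i) \<Longrightarrow> pre f k = pre g k"
  unfolding pre_def by (rule sum.cong) auto

lemma POK_zero: "POK n (\<lambda>_. 0)"
  by (auto simp: POK_def pre_def)

lemma POK_pad:
  assumes "POK n g"
  shows "POK (n+t) (\<lambda>i. if i < n then g i else 0)"
  unfolding POK_def
proof (intro allI impI)
  fix k assume k: "k \<le> n + t"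
  show "pre (\<lambda>i. if i < n then g i else 0) k \<in> {0,1}"
  proof (cases "k \<le> n")
    case True
    then have "pre (\<lambda>i. if i < n then g i else 0) k = pre g k" by (intro pre_cong) auto
    then show ?thesis using assms True by (simp add: POK_def)
  next
    case False
    then obtain d where d: "k = n + d" by (metis le_add_diff_inverse nat_le_linear)
    have "pre (\<lambda>i. if i < n then g i else 0) k = pre (\<lambda>i. if i < n then g i else 0) n + (\<Sum>r<d. (\<lambda>i. if i < n then g i else 0) (n + r))"
      unfolding d by (rule pre_add)
    also have "(\<Sum>r<d. (\<lambda>i. if i < n then g i else 0) (n + r)) = 0" by simp
    also have "pre (\<lambda>i. if i < n then g i else 0) n = pre g n" by (intro pre_cong) auto
    finally show ?thesis using assms by (simp add: POK_def)
  qed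
qed

lemma POK_if: "(P \<Longrightarrow> POK n f) \<Longrightarrow> POK n (\<lambda>j. if P then f j else 0)"
  by (cases P) (simp_all add: POK_zero)

lemma zero_ssp: "signed_subperm m n (\<lambda>i j. 0)"
  by (simp add: signed_subperm_def subperm_def)

lemma pad1:
  assumes "ent a b c h" "D1 POK a b c h" "D2 POK a b c h" "D3 POK a b c h"
  shows "reach (a,b,c,h) (a+t,b,c,\<lambda>i j l. if i < a then h i j l else 0) \<and>
    ent (a+t) b c (\<lambda>i j l. if i < a then h i j l else 0) \<and>
    D1 POK (a+t) b c (\<lambda>i j l. if i < a then h i j l else 0) \<and>
    D2 POK (a+t) b c (\<lambda>i j l. if i < a then h i j l else 0) \<and>
    D3 POK (a+t) b c (\<lambda>i j l. if i < a then h i j l else 0)"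
proof (intro conjI)
  show "reach (a,b,c,h) (a+t,b,c,\<lambda>i j l. if i < a then h i j l else 0)"
    using append1[of t b c "\<lambda>k i j. 0" a h] zero_ssp by simp
  show "ent (a+t) b c (\<lambda>i j l. if i < a then h i j l else 0)" using assms(1) by (auto simp: ent_def)
  show "D1 POK (a+t) b c (\<lambda>i j l. if i < a then h i j l else 0)"
    using assms(2) POK_pad by (auto simp: D1_def)
  show "D2 POK (a+t) b c (\<lambda>i j l. if i < a then h i j l else 0)"
    using assms(3) by (auto simp: D2_def intro!: POK_if)
  show "D3 POK (a+t) b c (\<lambda>i j l. if i < a then h i j l else 0)"
    using assms(4) by (auto simp: D3_def intro!: POK_if)
qed

lemma pad2:
  assumes "ent a b c h" "D1 POK a b c h" "D2 POK a b c h" "D3 POK a b c h"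
  shows "reach (a,b,c,h) (a,b+t,c,\<lambda>i j l. if j < b then h i j l else 0) \<and>
    ent a (b+t) c (\<lambda>i j l. if j < b then h i j l else 0) \<and>
    D1 POK a (b+t) c (\<lambda>i j l. if j < b then h i j l else 0) \<and>
    D2 POK a (b+t) c (\<lambda>i j l. if j < b then h i j l else 0) \<and>
    D3 POK a (b+t) c (\<lambda>i j l. if j < b then h i j l else 0)"
proof (intro conjI)
  show "reach (a,b,c,h) (a,b+t,c,\<lambda>i j l. if j < b then h i j l else 0)"
    using append2[of t a c "\<lambda>k i j. 0" b h] zero_ssp by simp
  show "ent a (b+t) c (\<lambda>i j l. if j < b then h i j l else 0)" using assms(1) by (auto simp: ent_def)
  show "D1 POK a (b+t) c (\<lambda>i j l. if j < b then h i j l else 0)"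
    using assms(2) by (auto simp: D1_def intro!: POK_if)
  show "D2 POK a (b+t) c (\<lambda>i j l. if j < b then h i j l else 0)"
    using assms(3) POK_pad by (auto simp: D2_def)
  show "D3 POK a (b+t) c (\<lambda>i j l. if j < b then h i j l else 0)"
    using assms(4) by (auto simp: D3_def intro!: POK_if)
qed

lemma pad3:
  assumes "ent a b c h" "D1 POK a b c h" "D2 POK a b c h" "D3 POK a b c h"
  shows "reach (a,b,c,h) (a,b,c+t,\<lambda>i j l. if l < c then h i j l else 0) \<and>
    ent a b (c+t) (\<lambda>i j l. if l < c then h i j l else 0) \<and>
    D1 POK a b (c+t) (\<lambda>i j l. if l < c then h i j l else 0) \<and>
    D2 POK a b (c+t) (\<lambda>i j l. if l < c then h i j l else 0) \<and>
    D3 POK a b (c+t) (\<lambda>i j l. if l < c then h i j l else 0)"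
proof (intro conjI)
  show "reach (a,b,c,h) (a,b,c+t,\<lambda>i j l. if l < c then h i j l else 0)"
    using append3[of t a b "\<lambda>k i j. 0" c h] zero_ssp by simp
  show "ent a b (c+t) (\<lambda>i j l. if l < c then h i j l else 0)" using assms(1) by (auto simp: ent_def)
  show "D1 POK a b (c+t) (\<lambda>i j l. if l < c then h i j l else 0)"
    using assms(2) by (auto simp: D1_def intro!: POK_if)
  show "D2 POK a b (c+t) (\<lambda>i j l. if l < c then h i j l else 0)"
    using assms(3) by (auto simp: D2_def intro!: POK_if)
  show "D3 POK a b (c+t) (\<lambda>i j l. if l < c then h i j l else 0)"
    using assms(4) POK_pad by (auto simp: D3_def)
qed

theorem cube:
  assumes "ent a b c h" "D1 POK a b c h" "D2 POK a b c h" "D3 POK a b c h"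
  shows "\<exists>N G. max a (max b c) = N \<and> reach (a,b,c,h) (N,N,N,G) \<and> ent N N N G \<and>
     D1 POK N N N G \<and> D2 POK N N N G \<and> D3 POK N N N G"
proof -
  define N where "N = max a (max b c)"
  define h1 where "h1 = (\<lambda>i j l. if i < a then h i j l else 0)"
  have s1: "reach (a,b,c,h) (a+(N-a),b,c,h1)" "ent (a+(N-a)) b c h1" "D1 POK (a+(N-a)) b c h1"
    "D2 POK (a+(N-a)) b c h1" "D3 POK (a+(N-a)) b c h1"
    using pad1[OF assms, of "N-a"] unfolding h1_def by auto
  have aN: "a + (N - a) = N" unfolding N_def by simp
  define h2 where "h2 = (\<lambda>i j l. if j < b then h1 i j l else 0)"
  have s2: "reach (N,b,c,h1) (N,b+(N-b),c,h2)" "ent N (b+(N-b)) c h2" "D1 POK N (b+(N-b)) c h2"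
    "D2 POK N (b+(N-b)) c h2" "D3 POK N (b+(N-b)) c h2"
    using pad2[of N b c h1 "N-b"] s1 aN unfolding h2_def by auto
  have bN: "b + (N - b) = N" unfolding N_def by simp
  define h3 where "h3 = (\<lambda>i j l. if l < c then h2 i j l else 0)"
  have s3: "reach (N,N,c,h2) (N,N,c+(N-c),h3)" "ent N N (c+(N-c)) h3" "D1 POK N N (c+(N-c)) h3"
    "D2 POK N N (c+(N-c)) h3" "D3 POK N N (c+(N-c)) h3"
    using pad3[of N N c h2 "N-c"] s2 bN unfolding h3_def by auto
  have cN: "c + (N - c) = N" unfolding N_def by simp
  have r1: "reach (a,b,c,h) (N,b,c,h1)" using s1(1) unfolding aN .
  have r2: "reach (N,b,c,h1) (N,N,c,h2)" using s2(1) unfolding bN .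
  have r3: "reach (N,N,c,h2) (N,N,N,h3)" using s3(1) unfolding cN .
  have R: "reach (a,b,c,h) (N,N,N,h3)" using reach_trans[OF reach_trans[OF r1 r2] r3] .
  have "ent N N N h3" "D1 POK N N N h3" "D2 POK N N N h3" "D3 POK N N N h3"
    using s3(2-5) unfolding cN by auto
  then show ?thesis using R unfolding N_def by blast
qed

lemma card01_sum:
  assumes "finite A" "\<forall>x\<in>A. f x \<in> {0,1::int}"
  shows "int (card {x\<in>A. f x = 1}) = sum f A"
proof -
  have "sum f A = (\<Sum>x\<in>A. if f x = 1 then 1 else 0)"
    using assms(2) by (intro sum.cong) auto
  also have "\<dots> = sum (\<lambda>_. 1::int) {x\<in>A. f x = 1}"
    using sum.inter_filter[OF assms(1), of "\<lambda>_. 1::int" "\<lambda>x. f x = 1"] by simp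
  also have "\<dots> = int (card {x\<in>A. f x = 1})" by simp
  finally show ?thesis by simp
qed

lemma plane_id:
  fixes u :: "nat \<Rightarrow> nat \<Rightarrow> int"
  assumes "\<forall>x<N. (\<Sum>y<N. u x y) \<in> {0,1}" "\<forall>y<N. (\<Sum>x<N. u x y) \<in> {0,1}"
  shows "card {x. x < N \<and> (\<Sum>y<N. u x y) = 1} = card {y. y < N \<and> (\<Sum>x<N. u x y) = 1}"
proof -
  have "int (card {x\<in>{..<N}. (\<Sum>y<N. u x y) = 1}) = (\<Sum>x<N. \<Sum>y<N. u x y)"
    using card01_sum[of "{..<N}" "\<lambda>x. \<Sum>y<N. u x y"] assms(1) by simp
  also have "\<dots> = (\<Sum>y<N. \<Sum>x<N. u x y)" by (rule sum.swap)
  also have "\<dots> = int (card {y\<in>{..<N}. (\<Sum>x<N. u x y) = 1})"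
    using card01_sum[of "{..<N}" "\<lambda>y. \<Sum>x<N. u x y"] assms(2) by simp
  finally have "card {x\<in>{..<N}. (\<Sum>y<N. u x y) = 1} = card {y\<in>{..<N}. (\<Sum>x<N. u x y) = 1}" by linarith
  moreover have "{x\<in>{..<N}. (\<Sum>y<N. u x y) = 1} = {x. x < N \<and> (\<Sum>y<N. u x y) = 1}" by auto
  moreover have "{y\<in>{..<N}. (\<Sum>x<N. u x y) = 1} = {y. y < N \<and> (\<Sum>x<N. u x y) = 1}" by auto
  ultimately show ?thesis by simp
qed

lemma modinv:
  fixes N k j l :: nat
  assumes "k < N" "j < N" "l < N"
  shows "(j + l) mod N = k \<longleftrightarrow> j = (k + N - l) mod N"
proof
  have A: "((k + N - l) mod N + l) mod N = k"
  proof -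
    have "((k + N - l) mod N + l) mod N = (k + N - l + l) mod N" by (simp add: mod_add_left_eq)
    also have "k + N - l + l = k + N" using assms by simp
    finally show ?thesis using assms(1) by simp
  qed
  show "j = (k + N - l) mod N" if "(j + l) mod N = k"
    using mod_inj[of j N "(k + N - l) mod N" l] that A assms by simp
  show "(j + l) mod N = k" if "j = (k + N - l) mod N"
    using that A by simp
qed

lemma minv_invol:
  fixes N k j :: nat
  assumes "k < N" "j < N"
  shows "(k + N - (k + N - j) mod N) mod N = j"
proof -
  have N0: "0 < N" using assms by simp
  define m where "m = (k + N - j) mod N"
  have m: "m < N" unfolding m_def using N0 by simp
  have "(m + j) mod N = k" using modinv[OF assms(1) m assms(2)] unfolding m_def by simp
  then have "(j + m) mod N = k" by (simp add: add.commute)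
  then show ?thesis using modinv[OF assms(1) assms(2) m] unfolding m_def by simp
qed

lemma card_invol:
  assumes "\<forall>x\<in>A. f x \<in> A" "\<forall>x\<in>A. f (f x) = x"
  shows "card {x\<in>A. Q x (f x)} = card {y\<in>A. Q (f y) y}"
proof -
  have inj: "inj_on f {x\<in>A. Q x (f x)}"
  proof (rule inj_onI)
    fix x y assume "x \<in> {x\<in>A. Q x (f x)}" "y \<in> {x\<in>A. Q x (f x)}" "f x = f y"
    then have "f (f x) = f (f y)" "x \<in> A" "y \<in> A" by auto
    then show "x = y" using assms(2) by simp
  qed
  have "f ` {x\<in>A. Q x (f x)} = {y\<in>A. Q (f y) y}"
  proof
    show "f ` {x\<in>A. Q x (f x)} \<subseteq> {y\<in>A. Q (f y) y}" using assms by auto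
    show "{y\<in>A. Q (f y) y} \<subseteq> f ` {x\<in>A. Q x (f x)}"
    proof
      fix y assume y: "y \<in> {y\<in>A. Q (f y) y}"
      then have "f y \<in> {x\<in>A. Q x (f x)}" using assms by auto
      moreover have "f (f y) = y" using assms y by auto
      ultimately show "y \<in> f ` {x\<in>A. Q x (f x)}" using image_eqI[of y f "f y"] by simp
    qed
  qed
  then show ?thesis using card_image[OF inj] by simp
qed

lemma card_minv:
  fixes N k :: nat
  assumes "k < N"
  shows "card {j. j < N \<and> Q j ((k + N - j) mod N)} = card {l. l < N \<and> Q ((k + N - l) mod N) l}"
proof -
  have N0: "0 < N" using assms by simp
  have "card {x\<in>{..<N}. Q x ((k + N - x) mod N)} = card {y\<in>{..<N}. Q ((k + N - y) mod N) y}"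
    by (rule card_invol) (use minv_invol[OF assms] N0 in auto)
  moreover have "{x\<in>{..<N}. Q x ((k + N - x) mod N)} = {j. j < N \<and> Q j ((k + N - j) mod N)}" by auto
  moreover have "{y\<in>{..<N}. Q ((k + N - y) mod N) y} = {l. l < N \<and> Q ((k + N - l) mod N) l}" by auto
  ultimately show ?thesis by simp
qed

definition XA :: "nat \<Rightarrow> hmat \<Rightarrow> nat \<Rightarrow> nat \<Rightarrow> nat \<Rightarrow> int" where
  "XA N h k j l = (if pre (\<lambda>i. h i j l) N = 0 \<and> (j + l) mod N = k then 1 else 0)"

lemma XA_col:
  assumes "k < N" "l < N"
  shows "pre (\<lambda>j. XA N h k j l) N = (if pre (\<lambda>i. h i ((k + N - l) mod N) l) N = 0 then 1 else 0)"
proof -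
  define j0 where "j0 = (k + N - l) mod N"
  have j0: "j0 < N" unfolding j0_def using assms by simp
  have "\<forall>j\<in>{..<N}. j \<noteq> j0 \<longrightarrow> XA N h k j l = 0"
    using modinv[OF assms(1) _ assms(2)] unfolding XA_def j0_def by auto
  then have "pre (\<lambda>j. XA N h k j l) N = XA N h k j0 l"
    unfolding pre_def using sum_single_nz[of "{..<N}" j0 "\<lambda>j. XA N h k j l"] j0 by simp
  also have "\<dots> = (if pre (\<lambda>i. h i j0 l) N = 0 then 1 else 0)"
    using modinv[OF assms(1) j0 assms(2)] unfolding XA_def j0_def by simp
  finally show ?thesis unfolding j0_def .
qed

lemma XA_row:
  assumes "k < N" "j < N"
  shows "pre (\<lambda>l. XA N h k j l) N = (if pre (\<lambda>i. h i j ((k + N - j) mod N)) N = 0 then 1 else 0)"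
proof -
  define l0 where "l0 = (k + N - j) mod N"
  have l0: "l0 < N" unfolding l0_def using assms by simp
  have eqv: "(j + l) mod N = k \<longleftrightarrow> l = l0" if "l < N" for l
    using modinv[OF assms(1) that assms(2)] unfolding l0_def by (simp add: add.commute)
  have "\<forall>l\<in>{..<N}. l \<noteq> l0 \<longrightarrow> XA N h k j l = 0"
    using eqv unfolding XA_def by auto
  then have "pre (\<lambda>l. XA N h k j l) N = XA N h k j l0"
    unfolding pre_def using sum_single_nz[of "{..<N}" l0 "\<lambda>l. XA N h k j l"] l0 by simp
  also have "\<dots> = (if pre (\<lambda>i. h i j l0) N = 0 then 1 else 0)"
    using eqv[OF l0] unfolding XA_def by simp
  finally show ?thesis unfolding l0_def .
qed

lemma XA_sumk:
  assumes "0 < N" "j < N" "l < N"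
  shows "pre (\<lambda>k. XA N h k j l) N = (if pre (\<lambda>i. h i j l) N = 0 then 1 else 0)"
proof -
  define k0 where "k0 = (j + l) mod N"
  have k0: "k0 < N" unfolding k0_def using assms by simp
  have "\<forall>k\<in>{..<N}. k \<noteq> k0 \<longrightarrow> XA N h k j l = 0" unfolding XA_def k0_def by auto
  then have "pre (\<lambda>k. XA N h k j l) N = XA N h k0 j l"
    unfolding pre_def using sum_single_nz[of "{..<N}" k0 "\<lambda>k. XA N h k j l"] k0 by simp
  then show ?thesis unfolding XA_def k0_def by simp
qed

lemma XA_vals: "XA N h k j l \<in> {0,1}" by (simp add: XA_def)

lemma XA_single_j: "single N (\<lambda>j. XA N h k j l)"
  unfolding single_def
proof (intro allI impI)
  fix j j' assume a: "j < N" "j' < N" "XA N h k j l \<noteq> 0" "XA N h k j' l \<noteq> 0"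
  then have "(j + l) mod N = (j' + l) mod N" by (auto simp: XA_def split: if_splits)
  then show "j = j'" using mod_inj[of j N j' l] a by simp
qed

lemma XA_single_l: "single N (\<lambda>l. XA N h k j l)"
  unfolding single_def
proof (intro allI impI)
  fix l l' assume a: "l < N" "l' < N" "XA N h k j l \<noteq> 0" "XA N h k j l' \<noteq> 0"
  then have "(j + l) mod N = (j + l') mod N" by (auto simp: XA_def split: if_splits)
  then show "l = l'" using mod_inj2[of l N l' j] a by simp
qed

lemma XA_single_k: "single N (\<lambda>k. XA N h k j l)"
  unfolding single_def XA_def by auto

lemma XA_ssp: "signed_subperm N N (XA N h k)"
proof -
  have "subperm N N (XA N h k)"
    unfolding subperm_def
  proof (intro conjI allI impI)
    fix i j assume "i < N" "j < N"
    show "XA N h k i j \<in> {0,1}" by (rule XA_vals)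
  next
    fix i j j' assume ij: "i < N" "j < N" "j' < N" "XA N h k i j = 1 \<and> XA N h k i j' = 1"
    then have "(i + j) mod N = (i + j') mod N" by (auto simp: XA_def split: if_splits)
    then show "j = j'" using mod_inj2[of j N j' i] ij by simp
  next
    fix j i i' assume ij: "j < N" "i < N" "i' < N" "XA N h k i j = 1 \<and> XA N h k i' j = 1"
    then have "(i + j) mod N = (i' + j) mod N" by (auto simp: XA_def split: if_splits)
    then show "i = i'" using mod_inj[of i N i' j] ij by simp
  qed
  then show ?thesis by (simp add: signed_subperm_def)
qed

lemma card_split2:
  fixes N :: nat
  shows "card {i. i < 2*N \<and> P i} = card {i. i < N \<and> P i} + card {k. k < N \<and> P (N + k)}"
proof -
  have "{i. i < 2*N \<and> P i} = {i. i < N \<and> P i} \<union> (\<lambda>k. N + k) ` {k. k < N \<and> P (N + k)}"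
  proof
    show "{i. i < 2*N \<and> P i} \<subseteq> {i. i < N \<and> P i} \<union> (\<lambda>k. N + k) ` {k. k < N \<and> P (N + k)}"
    proof
      fix i assume i: "i \<in> {i. i < 2*N \<and> P i}"
      show "i \<in> {i. i < N \<and> P i} \<union> (\<lambda>k. N + k) ` {k. k < N \<and> P (N + k)}"
      proof (cases "i < N")
        case True then show ?thesis using i by auto
      next
        case False
        then have "i = N + (i - N)" "i - N < N" using i by auto
        then show ?thesis using i by (metis (mono_tags, lifting) UnI2 image_eqI mem_Collect_eq)
      qed
    qed
    show "{i. i < N \<and> P i} \<union> (\<lambda>k. N + k) ` {k. k < N \<and> P (N + k)} \<subseteq> {i. i < 2*N \<and> P i}" by auto
  qed
  moreover have "{i. i < N \<and> P i} \<inter> (\<lambda>k. N + k) ` {k. k < N \<and> P (N + k)} = {}" by auto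
  moreover have "card ((\<lambda>k. N + k) ` {k. k < N \<and> P (N + k)}) = card {k. k < N \<and> P (N + k)}"
    by (rule card_image) (auto simp: inj_on_def)
  ultimately show ?thesis by (simp add: card_Un_disjoint)
qed

lemma card_part01:
  assumes "\<forall>x<N. f x \<in> {0,1::int}"
  shows "card {x. x < N \<and> f x = 0} + card {x. x < N \<and> f x = 1} = N"
proof -
  have "{x. x < N \<and> f x = 0} \<union> {x. x < N \<and> f x = 1} = {..<N}" using assms by auto
  moreover have "{x. x < N \<and> f x = 0} \<inter> {x. x < N \<and> f x = 1} = {}" by auto
  ultimately show ?thesis using card_Un_disjoint[of "{x. x < N \<and> f x = 0}" "{x. x < N \<and> f x = 1}"]
    by simp
qed

lemma card_compl2:
  fixes N :: nat
  shows "card {x. x < N \<and> \<not> P x} = N - card {x. x < N \<and> P x}"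
proof -
  have "{x. x < N \<and> \<not> P x} = {..<N} - {x. x < N \<and> P x}" by auto
  moreover have "{x. x < N \<and> P x} \<subseteq> {..<N}" by auto
  ultimately show ?thesis by (simp add: card_Diff_subset)
qed

lemma card_shift:
  fixes N l :: nat
  assumes "l < N"
  shows "card {k. k < N \<and> P ((k + N - l) mod N)} = card {j. j < N \<and> P j}"
proof -
  define f where "f = (\<lambda>k. (k + N - l) mod N)"
  have inj: "inj_on f {k. k < N \<and> P ((k + N - l) mod N)}"
  proof (rule inj_onI)
    fix x y assume x: "x \<in> {k. k < N \<and> P ((k + N - l) mod N)}" and y: "y \<in> {k. k < N \<and> P ((k + N - l) mod N)}"
      and e: "f x = f y"
    have "(x + (N - l)) mod N = (y + (N - l)) mod N" using e assms unfolding f_def by simp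
    then show "x = y" using mod_inj[of x N y "N - l"] x y by simp
  qed
  have "f ` {k. k < N \<and> P ((k + N - l) mod N)} = {j. j < N \<and> P j}"
  proof
    show "f ` {k. k < N \<and> P ((k + N - l) mod N)} \<subseteq> {j. j < N \<and> P j}" using assms unfolding f_def by auto
    show "{j. j < N \<and> P j} \<subseteq> f ` {k. k < N \<and> P ((k + N - l) mod N)}"
    proof
      fix j assume j: "j \<in> {j. j < N \<and> P j}"
      define k where "k = (j + l) mod N"
      have k: "k < N" unfolding k_def using assms by simp
      have "(j + l) mod N = k" unfolding k_def by simp
      then have "j = (k + N - l) mod N" using modinv[OF k _ assms] j by simp
      then have "f k = j" unfolding f_def by simp
      then show "j \<in> f ` {k. k < N \<and> P ((k + N - l) mod N)}" using k j unfolding f_def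
        using image_eqI[of j "\<lambda>k. (k + N - l) mod N" k] by auto
    qed
  qed
  then show ?thesis using card_image[OF inj] by simp
qed

locale fill =
  fixes N :: nat and h :: hmat
  assumes N0: "0 < N" and ENT: "ent N N N h"
    and P1: "D1 POK N N N h" and P2: "D2 POK N N N h" and P3: "D3 POK N N N h"
begin

lemma t1_01: "j < N \<Longrightarrow> l < N \<Longrightarrow> pre (\<lambda>i. h i j l) N \<in> {0,1}"
  using P1 unfolding D1_def POK_def by auto
lemma t2_01: "i < N \<Longrightarrow> l < N \<Longrightarrow> pre (\<lambda>j. h i j l) N \<in> {0,1}"
  using P2 unfolding D2_def POK_def by auto
lemma t3_01: "i < N \<Longrightarrow> j < N \<Longrightarrow> pre (\<lambda>l. h i j l) N \<in> {0,1}"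
  using P3 unfolding D3_def POK_def by auto

lemma pl_l: "l < N \<Longrightarrow> card {i. i < N \<and> pre (\<lambda>j. h i j l) N = 1} = card {j. j < N \<and> pre (\<lambda>i. h i j l) N = 1}"
  using plane_id[of N "\<lambda>x y. h x y l"] t1_01 t2_01 unfolding pre_def by auto
lemma pl_i: "i < N \<Longrightarrow> card {j. j < N \<and> pre (\<lambda>l. h i j l) N = 1} = card {l. l < N \<and> pre (\<lambda>j. h i j l) N = 1}"
  using plane_id[of N "\<lambda>x y. h i x y"] t2_01 t3_01 unfolding pre_def by auto
lemma pl_j: "j < N \<Longrightarrow> card {i. i < N \<and> pre (\<lambda>l. h i j l) N = 1} = card {l. l < N \<and> pre (\<lambda>i. h i j l) N = 1}"
  using plane_id[of N "\<lambda>x y. h x j y"] t1_01 t3_01 unfolding pre_def by auto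

definition H1 :: hmat where "H1 = (\<lambda>i j l. if i < N then h i j l else XA N h (i - N) j l)"
definition E2 :: "nat \<Rightarrow> nat \<Rightarrow> bool" where "E2 i l \<longleftrightarrow> pre (\<lambda>j. H1 i j l) N = 0"

lemma E2_lo: "i < N \<Longrightarrow> E2 i l \<longleftrightarrow> pre (\<lambda>j. h i j l) N = 0"
  unfolding E2_def H1_def by simp

lemma E2_hi: "k < N \<Longrightarrow> l < N \<Longrightarrow> E2 (N + k) l \<longleftrightarrow> pre (\<lambda>i. h i ((k + N - l) mod N) l) N = 1"
proof -
  assume k: "k < N" and l: "l < N"
  have "pre (\<lambda>j. H1 (N + k) j l) N = pre (\<lambda>j. XA N h k j l) N" unfolding H1_def by simp
  also have "\<dots> = (if pre (\<lambda>i. h i ((k + N - l) mod N) l) N = 0 then 1 else 0)" by (rule XA_col[OF k l])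
  finally have "E2 (N + k) l \<longleftrightarrow> pre (\<lambda>i. h i ((k + N - l) mod N) l) N \<noteq> 0" unfolding E2_def by simp
  moreover have "(k + N - l) mod N < N" using N0 by simp
  ultimately show ?thesis using t1_01[of "(k + N - l) mod N" l] l by auto
qed

lemma countB: "l < N \<Longrightarrow> card {i. i < 2*N \<and> E2 i l} = N"
proof -
  assume l: "l < N"
  have "card {i. i < 2*N \<and> E2 i l} = card {i. i < N \<and> E2 i l} + card {k. k < N \<and> E2 (N + k) l}"
    by (rule card_split2)
  also have "card {i. i < N \<and> E2 i l} = card {i. i < N \<and> pre (\<lambda>j. h i j l) N = 0}"
    using E2_lo by (metis (no_types, lifting))
  also have "card {k. k < N \<and> E2 (N + k) l} = card {k. k < N \<and> pre (\<lambda>i. h i ((k + N - l) mod N) l) N = 1}"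
    using E2_hi l by (metis (no_types, lifting))
  also have "\<dots> = card {j. j < N \<and> pre (\<lambda>i. h i j l) N = 1}"
    by (rule card_shift[OF l])
  also have "\<dots> = card {i. i < N \<and> pre (\<lambda>j. h i j l) N = 1}" using pl_l[OF l] by simp
  also have "card {i. i < N \<and> pre (\<lambda>j. h i j l) N = 0} + card {i. i < N \<and> pre (\<lambda>j. h i j l) N = 1} = N"
    by (rule card_part01) (use t2_01 l in auto)
  finally show ?thesis .
qed

definition F :: "nat \<Rightarrow> nat \<Rightarrow> bool" where "F r c \<longleftrightarrow> (if r < N then E2 c r else \<not> E2 c (r - N))"

lemma F_rows: "\<forall>r<2*N. card {c. c < 2*N \<and> F r c} = N"
proof (intro allI impI)
  fix r assume r: "r < 2*N"
  show "card {c. c < 2*N \<and> F r c} = N"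
  proof (cases "r < N")
    case True
    then have "{c. c < 2*N \<and> F r c} = {c. c < 2*N \<and> E2 c r}" unfolding F_def by auto
    then show ?thesis using countB[OF True] by simp
  next
    case False
    then have rN: "r - N < N" using r by simp
    have "{c. c < 2*N \<and> F r c} = {c. c < 2*N \<and> \<not> E2 c (r - N)}" unfolding F_def using False by auto
    then show ?thesis using countB[OF rN] card_compl2[of "2*N" "\<lambda>c. E2 c (r - N)"] by simp
  qed
qed

lemma F_cols: "\<forall>c<2*N. card {r. r < 2*N \<and> F r c} = N"
proof (intro allI impI)
  fix c assume c: "c < 2*N"
  have "card {r. r < 2*N \<and> F r c} = card {r. r < N \<and> F r c} + card {k. k < N \<and> F (N + k) c}"
    by (rule card_split2)
  also have "card {r. r < N \<and> F r c} = card {r. r < N \<and> E2 c r}"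
    unfolding F_def by (metis (no_types, lifting))
  also have "card {k. k < N \<and> F (N + k) c} = card {k. k < N \<and> \<not> E2 c k}"
    unfolding F_def by simp
  also have "\<dots> = N - card {k. k < N \<and> E2 c k}" by (rule card_compl2)
  also have "card {r. r < N \<and> E2 c r} + (N - card {k. k < N \<and> E2 c k}) = N"
  proof -
    have "card {k. k < N \<and> E2 c k} \<le> card {..<N}" by (rule card_mono) auto
    then show ?thesis by simp
  qed
  finally show "card {r. r < 2*N \<and> F r c} = N" .
qed

end

locale fill2 = fill +
  fixes \<sigma> :: "nat \<Rightarrow> nat \<Rightarrow> nat"
  assumes S1: "\<forall>t<N. \<forall>r<2*N. \<sigma> t r < 2*N \<and> F r (\<sigma> t r)"
    and S2: "\<forall>t<N. inj_on (\<sigma> t) {..<2*N}"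
    and S3: "\<forall>r<2*N. \<forall>c<2*N. F r c \<longrightarrow> (\<exists>!t. t < N \<and> \<sigma> t r = c)"
begin

definition YB :: "nat \<Rightarrow> nat \<Rightarrow> nat \<Rightarrow> int" where "YB t i l = (if \<sigma> t l = i then 1 else 0)"
definition H2 :: hmat where "H2 = (\<lambda>i j l. if j < N then H1 i j l else YB (j - N) i l)"
definition E3 :: "nat \<Rightarrow> nat \<Rightarrow> bool" where "E3 i j \<longleftrightarrow> pre (\<lambda>l. H2 i j l) N = 0"

lemma YB_ssp: "t < N \<Longrightarrow> signed_subperm (2*N) N (YB t)"
proof -
  assume t: "t < N"
  have "subperm (2*N) N (YB t)"
    unfolding subperm_def
  proof (intro conjI allI impI)
    fix i l assume "i < 2*N" "l < N" then show "YB t i l \<in> {0,1}" by (simp add: YB_def)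
  next
    fix i l l' assume a: "i < 2*N" "l < N" "l' < N" "YB t i l = 1 \<and> YB t i l' = 1"
    then have "\<sigma> t l = \<sigma> t l'" by (auto simp: YB_def split: if_splits)
    moreover have "l \<in> {..<2*N}" "l' \<in> {..<2*N}" using a by auto
    ultimately show "l = l'" using S2 t by (auto dest: inj_onD)
  next
    fix l i i' assume a: "l < N" "i < 2*N" "i' < 2*N" "YB t i l = 1 \<and> YB t i' l = 1"
    then show "i = i'" by (auto simp: YB_def split: if_splits)
  qed
  then show ?thesis by (simp add: signed_subperm_def)
qed

lemma YB_single_l: "t < N \<Longrightarrow> single N (\<lambda>l. YB t i l)"
  unfolding single_def
proof (intro allI impI)
  fix l l' assume a: "t < N" "l < N" "l' < N" "YB t i l \<noteq> 0" "YB t i l' \<noteq> 0"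
  then have "\<sigma> t l = \<sigma> t l'" by (auto simp: YB_def split: if_splits)
  moreover have "l \<in> {..<2*N}" "l' \<in> {..<2*N}" using a by auto
  ultimately show "l = l'" using S2 a(1) by (auto dest: inj_onD)
qed

lemma YB_single_t: "l < N \<Longrightarrow> i < 2*N \<Longrightarrow> single N (\<lambda>t. YB t i l)"
  unfolding single_def
proof (intro allI impI)
  fix t t' assume a: "l < N" "i < 2*N" "t < N" "t' < N" "YB t i l \<noteq> 0" "YB t' i l \<noteq> 0"
  then have e: "\<sigma> t l = i" "\<sigma> t' l = i" by (auto simp: YB_def split: if_splits)
  have "l < 2*N" using a by simp
  then have "F l (\<sigma> t l)" using S1 a(3) by blast
  then have "F l i" using e by simp
  then have "\<exists>!t. t < N \<and> \<sigma> t l = i" using S3 a \<open>l < 2*N\<close> by blast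
  then show "t = t'" using e a by auto
qed

lemma YB_single_i: "single M (\<lambda>i. YB t i l)"
  unfolding single_def YB_def by auto

lemma pre_YB_l:
  assumes "t < N"
  shows "pre (\<lambda>l. YB t i l) N = (if \<exists>l<N. \<sigma> t l = i then 1 else 0)"
proof (cases "\<exists>l<N. \<sigma> t l = i")
  case True
  then obtain l0 where l0: "l0 < N" "\<sigma> t l0 = i" by blast
  have "\<forall>l\<in>{..<N}. l \<noteq> l0 \<longrightarrow> YB t i l = 0"
    using YB_single_l[OF assms, of i] l0 unfolding single_def YB_def by auto
  then have "pre (\<lambda>l. YB t i l) N = YB t i l0"
    unfolding pre_def using sum_single_nz[of "{..<N}" l0 "\<lambda>l. YB t i l"] l0 by simp
  then show ?thesis using True l0 by (simp add: YB_def)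
next
  case False
  then have "\<forall>l<N. YB t i l = 0" by (auto simp: YB_def)
  then show ?thesis using False unfolding pre_def by simp
qed

lemma pre_YB_t:
  assumes "l < N" "i < 2*N"
  shows "pre (\<lambda>t. YB t i l) N = (if E2 i l then 1 else 0)"
proof (cases "E2 i l")
  case True
  then have "F l i" using assms unfolding F_def by simp
  have "l < 2*N" using assms by simp
  then have "\<exists>!t. t < N \<and> \<sigma> t l = i" using S3 \<open>F l i\<close> assms by blast
  then obtain t0 where t0: "t0 < N" "\<sigma> t0 l = i" and u: "\<forall>t. t < N \<and> \<sigma> t l = i \<longrightarrow> t = t0"
    by blast
  have "\<forall>t\<in>{..<N}. t \<noteq> t0 \<longrightarrow> YB t i l = 0" using u by (auto simp: YB_def)
  then have "pre (\<lambda>t. YB t i l) N = YB t0 i l"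
    unfolding pre_def using sum_single_nz[of "{..<N}" t0 "\<lambda>t. YB t i l"] t0 by simp
  then show ?thesis using True t0 by (simp add: YB_def)
next
  case False
  have "\<forall>t<N. YB t i l = 0"
  proof (intro allI impI)
    fix t assume t: "t < N"
    show "YB t i l = 0"
    proof (rule ccontr)
      assume "YB t i l \<noteq> 0"
      then have "\<sigma> t l = i" by (simp add: YB_def split: if_splits)
      moreover have "l < 2*N" using assms by simp
      then have "F l (\<sigma> t l)" using S1 t by blast
      ultimately show False using False assms unfolding F_def by simp
    qed
  qed
  then show ?thesis using False unfolding pre_def by simp
qed

lemma E3_ll: "i < N \<Longrightarrow> j < N \<Longrightarrow> E3 i j \<longleftrightarrow> pre (\<lambda>l. h i j l) N = 0"
  unfolding E3_def H2_def H1_def by simp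

lemma E3_hl: "k < N \<Longrightarrow> j < N \<Longrightarrow> E3 (N + k) j \<longleftrightarrow> pre (\<lambda>i. h i j ((k + N - j) mod N)) N = 1"
proof -
  assume k: "k < N" and j: "j < N"
  have "pre (\<lambda>l. H2 (N + k) j l) N = pre (\<lambda>l. XA N h k j l) N" unfolding H2_def H1_def using j by simp
  also have "\<dots> = (if pre (\<lambda>i. h i j ((k + N - j) mod N)) N = 0 then 1 else 0)" by (rule XA_row[OF k j])
  finally have "E3 (N + k) j \<longleftrightarrow> pre (\<lambda>i. h i j ((k + N - j) mod N)) N \<noteq> 0" unfolding E3_def by simp
  moreover have "(k + N - j) mod N < N" using N0 by simp
  ultimately show ?thesis using t1_01[of j "(k + N - j) mod N"] j by auto
qed

lemma E3_xh: "t < N \<Longrightarrow> E3 i (N + t) \<longleftrightarrow> \<not> (\<exists>l<N. \<sigma> t l = i)"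
proof -
  assume t: "t < N"
  have "pre (\<lambda>l. H2 i (N + t) l) N = pre (\<lambda>l. YB t i l) N" unfolding H2_def by simp
  then show ?thesis unfolding E3_def using pre_YB_l[OF t, of i] by simp
qed

lemma G1:
  assumes "i < 2*N"
  shows "card {t. t < N \<and> (\<exists>l<N. \<sigma> t l = i)} = card {l. l < N \<and> E2 i l}"
proof -
  define P where "P = {(t,l). t < N \<and> l < N \<and> \<sigma> t l = i}"
  have fstP: "fst ` P = {t. t < N \<and> (\<exists>l<N. \<sigma> t l = i)}"
  proof
    show "fst ` P \<subseteq> {t. t < N \<and> (\<exists>l<N. \<sigma> t l = i)}" unfolding P_def by auto
    show "{t. t < N \<and> (\<exists>l<N. \<sigma> t l = i)} \<subseteq> fst ` P"
    proof
      fix t assume "t \<in> {t. t < N \<and> (\<exists>l<N. \<sigma> t l = i)}"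
      then obtain l where "t < N" "l < N" "\<sigma> t l = i" by blast
      then have "(t,l) \<in> P" unfolding P_def by simp
      then show "t \<in> fst ` P" using image_eqI[of t fst "(t,l)"] by simp
    qed
  qed
  have sndP: "snd ` P = {l. l < N \<and> E2 i l}"
  proof
    show "snd ` P \<subseteq> {l. l < N \<and> E2 i l}"
    proof
      fix l assume "l \<in> snd ` P"
      then obtain t where tl: "t < N" "l < N" "\<sigma> t l = i" unfolding P_def by auto
      have "l < 2*N" using tl by simp
      then have "F l (\<sigma> t l)" using S1 tl(1) by blast
      then show "l \<in> {l. l < N \<and> E2 i l}" using tl unfolding F_def by simp
    qed
    show "{l. l < N \<and> E2 i l} \<subseteq> snd ` P"
    proof
      fix l assume l: "l \<in> {l. l < N \<and> E2 i l}"
      then have "F l i" unfolding F_def by simp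
      have "l < 2*N" using l by simp
      then have "\<exists>!t. t < N \<and> \<sigma> t l = i" using S3 \<open>F l i\<close> assms by blast
      then obtain t where "t < N" "\<sigma> t l = i" by blast
      then have "(t,l) \<in> P" using l unfolding P_def by simp
      then show "l \<in> snd ` P" using image_eqI[of l snd "(t,l)"] by simp
    qed
  qed
  have injf: "inj_on fst P"
  proof (rule inj_onI)
    fix x y assume x: "x \<in> P" and y: "y \<in> P" and e: "fst x = fst y"
    obtain t l where xt: "x = (t,l)" "t < N" "l < N" "\<sigma> t l = i" using x unfolding P_def by auto
    obtain t' l' where yt: "y = (t',l')" "t' < N" "l' < N" "\<sigma> t' l' = i" using y unfolding P_def by auto
    have "t = t'" using e xt yt by simp
    then have "\<sigma> t l = \<sigma> t l'" using xt yt by simp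
    moreover have "l \<in> {..<2*N}" "l' \<in> {..<2*N}" using xt yt by auto
    ultimately have "l = l'" using S2 xt(2) by (auto dest: inj_onD)
    then show "x = y" using xt yt \<open>t = t'\<close> by simp
  qed
  have injs: "inj_on snd P"
  proof (rule inj_onI)
    fix x y assume x: "x \<in> P" and y: "y \<in> P" and e: "snd x = snd y"
    obtain t l where xt: "x = (t,l)" "t < N" "l < N" "\<sigma> t l = i" using x unfolding P_def by auto
    obtain t' l' where yt: "y = (t',l')" "t' < N" "l' < N" "\<sigma> t' l' = i" using y unfolding P_def by auto
    have "l = l'" using e xt yt by simp
    have l2: "l < 2*N" using xt by simp
    then have "F l (\<sigma> t l)" using S1 xt(2) by blast
    then have "F l i" using xt by simp
    then have "\<exists>!t. t < N \<and> \<sigma> t l = i" using S3 l2 assms by blast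
    then have "t = t'" using xt yt \<open>l = l'\<close> by auto
    then show "x = y" using xt yt \<open>l = l'\<close> by simp
  qed
  have "card {t. t < N \<and> (\<exists>l<N. \<sigma> t l = i)} = card P" using card_image[OF injf] fstP by simp
  also have "\<dots> = card {l. l < N \<and> E2 i l}" using card_image[OF injs] sndP by simp
  finally show ?thesis .
qed

end

context fill2
begin

lemma card_le_N: "card {x. x < (M::nat) \<and> P x} \<le> M"
proof -
  have "card {x. x < M \<and> P x} \<le> card {..<M}" by (rule card_mono) auto
  then show ?thesis by simp
qed

lemma E3_row_lo:
  assumes i: "i < N"
  shows "card {j. j < 2*N \<and> E3 i j} = N"
proof -
  have "card {j. j < 2*N \<and> E3 i j} = card {j. j < N \<and> E3 i j} + card {t. t < N \<and> E3 i (N + t)}"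
    by (rule card_split2)
  also have "card {j. j < N \<and> E3 i j} = card {j. j < N \<and> pre (\<lambda>l. h i j l) N = 0}"
    using E3_ll[OF i] by (metis (no_types, lifting))
  also have "card {t. t < N \<and> E3 i (N + t)} = card {t. t < N \<and> \<not> (\<exists>l<N. \<sigma> t l = i)}"
    using E3_xh by (metis (no_types, lifting))
  also have "\<dots> = N - card {t. t < N \<and> (\<exists>l<N. \<sigma> t l = i)}" by (rule card_compl2)
  also have "card {t. t < N \<and> (\<exists>l<N. \<sigma> t l = i)} = card {l. l < N \<and> E2 i l}"
    using G1[of i] i by simp
  also have "card {l. l < N \<and> E2 i l} = card {l. l < N \<and> pre (\<lambda>j. h i j l) N = 0}"
    using E2_lo[OF i] by (metis (no_types, lifting))
  finally have eq: "card {j. j < 2*N \<and> E3 i j} = card {j. j < N \<and> pre (\<lambda>l. h i j l) N = 0} +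
      (N - card {l. l < N \<and> pre (\<lambda>j. h i j l) N = 0})" .
  have a: "card {j. j < N \<and> pre (\<lambda>l. h i j l) N = 0} + card {j. j < N \<and> pre (\<lambda>l. h i j l) N = 1} = N"
    by (rule card_part01) (use t3_01 i in auto)
  have b: "card {l. l < N \<and> pre (\<lambda>j. h i j l) N = 0} + card {l. l < N \<and> pre (\<lambda>j. h i j l) N = 1} = N"
    by (rule card_part01) (use t2_01 i in auto)
  have c: "card {j. j < N \<and> pre (\<lambda>l. h i j l) N = 1} = card {l. l < N \<and> pre (\<lambda>j. h i j l) N = 1}"
    using pl_i[OF i] .
  show ?thesis using eq a b c by linarith
qed

lemma E3_row_hi:
  assumes k: "k < N"
  shows "card {j. j < 2*N \<and> E3 (N + k) j} = N"
proof -
  have "card {j. j < 2*N \<and> E3 (N + k) j} = card {j. j < N \<and> E3 (N + k) j} + card {t. t < N \<and> E3 (N + k) (N + t)}"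
    by (rule card_split2)
  also have "card {j. j < N \<and> E3 (N + k) j} = card {j. j < N \<and> pre (\<lambda>i. h i j ((k + N - j) mod N)) N = 1}"
    using E3_hl[OF k] by (metis (no_types, lifting))
  also have "\<dots> = card {l. l < N \<and> pre (\<lambda>i. h i ((k + N - l) mod N) l) N = 1}"
    by (rule card_minv[OF k])
  also have "card {t. t < N \<and> E3 (N + k) (N + t)} = card {t. t < N \<and> \<not> (\<exists>l<N. \<sigma> t l = N + k)}"
    using E3_xh by (metis (no_types, lifting))
  also have "\<dots> = N - card {t. t < N \<and> (\<exists>l<N. \<sigma> t l = N + k)}" by (rule card_compl2)
  also have "card {t. t < N \<and> (\<exists>l<N. \<sigma> t l = N + k)} = card {l. l < N \<and> E2 (N + k) l}"
    using G1[of "N + k"] k by simp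
  also have "card {l. l < N \<and> E2 (N + k) l} = card {l. l < N \<and> pre (\<lambda>i. h i ((k + N - l) mod N) l) N = 1}"
    using E2_hi[OF k] by (metis (no_types, lifting))
  finally show ?thesis using card_le_N[of N "\<lambda>l. pre (\<lambda>i. h i ((k + N - l) mod N) l) N = 1"] by linarith
qed

lemma E3_rows: "\<forall>i<2*N. card {j. j < 2*N \<and> E3 i j} = N"
proof (intro allI impI)
  fix i assume i: "i < 2*N"
  show "card {j. j < 2*N \<and> E3 i j} = N"
  proof (cases "i < N")
    case True then show ?thesis by (rule E3_row_lo)
  next
    case False
    then have "i = N + (i - N)" "i - N < N" using i by auto
    then show ?thesis using E3_row_hi[of "i - N"] by metis
  qed
qed

lemma E3_col_lo:
  assumes j: "j < N"
  shows "card {i. i < 2*N \<and> E3 i j} = N"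
proof -
  have "card {i. i < 2*N \<and> E3 i j} = card {i. i < N \<and> E3 i j} + card {k. k < N \<and> E3 (N + k) j}"
    by (rule card_split2)
  also have "card {i. i < N \<and> E3 i j} = card {i. i < N \<and> pre (\<lambda>l. h i j l) N = 0}"
    using E3_ll j by (metis (no_types, lifting))
  also have "card {k. k < N \<and> E3 (N + k) j} = card {k. k < N \<and> pre (\<lambda>i. h i j ((k + N - j) mod N)) N = 1}"
    using E3_hl j by (metis (no_types, lifting))
  also have "\<dots> = card {l. l < N \<and> pre (\<lambda>i. h i j l) N = 1}"
    by (rule card_shift[OF j])
  finally have eq: "card {i. i < 2*N \<and> E3 i j} = card {i. i < N \<and> pre (\<lambda>l. h i j l) N = 0} + card {l. l < N \<and> pre (\<lambda>i. h i j l) N = 1}" .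
  have a: "card {i. i < N \<and> pre (\<lambda>l. h i j l) N = 0} + card {i. i < N \<and> pre (\<lambda>l. h i j l) N = 1} = N"
    by (rule card_part01) (use t3_01 j in auto)
  show ?thesis using eq a pl_j[OF j] by linarith
qed

lemma E3_col_hi:
  assumes t: "t < N"
  shows "card {i. i < 2*N \<and> E3 i (N + t)} = N"
proof -
  have "{i. i < 2*N \<and> E3 i (N + t)} = {i. i < 2*N \<and> \<not> (\<exists>l<N. \<sigma> t l = i)}" using E3_xh[OF t] by auto
  then have "card {i. i < 2*N \<and> E3 i (N + t)} = 2*N - card {i. i < 2*N \<and> (\<exists>l<N. \<sigma> t l = i)}"
    using card_compl2[of "2*N" "\<lambda>i. \<exists>l<N. \<sigma> t l = i"] by simp
  also have "{i. i < 2*N \<and> (\<exists>l<N. \<sigma> t l = i)} = \<sigma> t ` {..<N}"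
  proof
    show "{i. i < 2*N \<and> (\<exists>l<N. \<sigma> t l = i)} \<subseteq> \<sigma> t ` {..<N}" by auto
    show "\<sigma> t ` {..<N} \<subseteq> {i. i < 2*N \<and> (\<exists>l<N. \<sigma> t l = i)}"
    proof
      fix x assume "x \<in> \<sigma> t ` {..<N}"
      then obtain l where l: "l < N" "x = \<sigma> t l" by auto
      have "l < 2*N" using l by simp
      then have "\<sigma> t l < 2*N" using S1 t by blast
      then show "x \<in> {i. i < 2*N \<and> (\<exists>l<N. \<sigma> t l = i)}" using l by auto
    qed
  qed
  also have "card (\<sigma> t ` {..<N}) = N"
  proof -
    have "inj_on (\<sigma> t) {..<2*N}" using S2 t by blast
    then have "inj_on (\<sigma> t) {..<N}" by (rule inj_on_subset) auto
    then show ?thesis by (simp add: card_image)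
  qed
  finally show ?thesis by simp
qed

lemma E3_cols: "\<forall>j<2*N. card {i. i < 2*N \<and> E3 i j} = N"
proof (intro allI impI)
  fix j assume j: "j < 2*N"
  show "card {i. i < 2*N \<and> E3 i j} = N"
  proof (cases "j < N")
    case True then show ?thesis by (rule E3_col_lo)
  next
    case False
    then have "j = N + (j - N)" "j - N < N" using j by auto
    then show ?thesis using E3_col_hi[of "j - N"] by metis
  qed
qed

end

lemma pre_mono_nonneg:
  assumes "\<forall>i<m. g i \<ge> 0" "d \<le> m"
  shows "pre g d \<le> pre g m"
proof -
  obtain e where e: "m = d + e" using assms(2) le_Suc_ex by blast
  have "pre g m = pre g d + (\<Sum>r<e. g (d + r))" unfolding e by (rule pre_add)
  moreover have "(\<Sum>r<e. g (d + r)) \<ge> 0" using assms(1) e by (intro sum_nonneg) auto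
  ultimately show ?thesis by simp
qed

lemma pre_nonneg: "\<forall>i<m. g i \<ge> 0 \<Longrightarrow> d \<le> m \<Longrightarrow> pre g d \<ge> 0"
  unfolding pre_def by (intro sum_nonneg) auto

lemma good_concat:
  assumes f: "POK n f" and gv: "\<forall>i<m. g i \<in> {0,1}" and gs: "single m g" and gp: "pre g m = 1 - pre f n"
  shows "good (n+m) (\<lambda>i. if i < n then f i else g (i - n))"
proof -
  let ?u = "\<lambda>i. if i < n then f i else g (i - n)"
  have pg: "POK m g" using single_POK[OF gs gv] .
  have pf: "pre f n \<in> {0,1}" using f by (auto simp: POK_def)
  have nn: "\<forall>i<m. g i \<ge> 0" using gv by auto
  have split: "pre ?u (n + d) = pre f n + pre g d" for d
  proof -
    have "pre ?u (n + d) = pre ?u n + (\<Sum>r<d. ?u (n + r))" by (rule pre_add)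
    also have "pre ?u n = pre f n" by (rule pre_cong) auto
    also have "(\<Sum>r<d. ?u (n + r)) = pre g d" unfolding pre_def by simp
    finally show ?thesis .
  qed
  have "POK (n+m) ?u"
    unfolding POK_def
  proof (intro allI impI)
    fix k assume k: "k \<le> n + m"
    show "pre ?u k \<in> {0,1}"
    proof (cases "k \<le> n")
      case True
      then have "pre ?u k = pre f k" by (intro pre_cong) auto
      then show ?thesis using f True by (simp add: POK_def)
    next
      case False
      then obtain d where d: "k = n + d" "d \<le> m" using k by (metis add_le_cancel_left le_add_diff_inverse nat_le_linear)
      have "pre g d \<in> {0,1}" using pg d(2) by (auto simp: POK_def)
      moreover have "pre g d \<le> pre g m" using pre_mono_nonneg[OF nn d(2)] .
      moreover have "pre g d \<ge> 0" using pre_nonneg[OF nn d(2)] .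
      ultimately show ?thesis using d split pf gp by auto
    qed
  qed
  moreover have "pre ?u (n + m) = 1" using split gp by simp
  ultimately show ?thesis unfolding good_def by simp
qed

lemma good_one:
  assumes "\<forall>i<m. g i \<in> {0,1}" "single m g" "pre g m = 1"
  shows "good m g"
  using single_POK[OF assms(2,1)] assms(3) unfolding good_def by simp

lemma pre_ind:
  assumes "i0 < m" "\<forall>i<m. i \<noteq> i0 \<longrightarrow> g i = 0"
  shows "pre g m = g i0"
  unfolding pre_def using sum_single_nz[of "{..<m}" i0 g] assms by simp

locale fill3 = fill2 +
  fixes \<tau> :: "nat \<Rightarrow> nat \<Rightarrow> nat"
  assumes T1: "\<forall>s<N. \<forall>i<2*N. \<tau> s i < 2*N \<and> E3 i (\<tau> s i)"
    and T2: "\<forall>s<N. inj_on (\<tau> s) {..<2*N}"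
    and T3: "\<forall>i<2*N. \<forall>j<2*N. E3 i j \<longrightarrow> (\<exists>!s. s < N \<and> \<tau> s i = j)"
begin

definition ZC :: "nat \<Rightarrow> nat \<Rightarrow> nat \<Rightarrow> int" where "ZC s i j = (if \<tau> s i = j then 1 else 0)"
definition H3 :: hmat where "H3 = (\<lambda>i j l. if l < N then H2 i j l else ZC (l - N) i j)"

lemma tau_surj: "s < N \<Longrightarrow> j < 2*N \<Longrightarrow> \<exists>i<2*N. \<tau> s i = j"
proof -
  assume s: "s < N" and j: "j < 2*N"
  have "\<tau> s ` {..<2*N} = {..<2*N}"
    by (rule endo_inj_surj) (use T1 T2 s in auto)
  then show ?thesis using j by (metis imageE lessThan_iff)
qed

lemma ZC_ssp: "s < N \<Longrightarrow> signed_subperm (N+N) (N+N) (ZC s)"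
proof -
  assume s: "s < N"
  have "subperm (N+N) (N+N) (ZC s)"
    unfolding subperm_def
  proof (intro conjI allI impI)
    fix i j assume "i < N+N" "j < N+N" then show "ZC s i j \<in> {0,1}" by (simp add: ZC_def)
  next
    fix i j j' assume "i < N+N" "j < N+N" "j' < N+N" "ZC s i j = 1 \<and> ZC s i j' = 1"
    then show "j = j'" by (auto simp: ZC_def split: if_splits)
  next
    fix j i i' assume a: "j < N+N" "i < N+N" "i' < N+N" "ZC s i j = 1 \<and> ZC s i' j = 1"
    then have "\<tau> s i = \<tau> s i'" by (auto simp: ZC_def split: if_splits)
    moreover have "inj_on (\<tau> s) {..<2*N}" using T2 s by blast
    ultimately show "i = i'" using a by (auto dest: inj_onD)
  qed
  then show ?thesis by (simp add: signed_subperm_def)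
qed

lemma RF: "reach (N,N,N,h) (2*N,2*N,2*N,H3)"
proof -
  have r1: "reach (N,N,N,h) (N+N, N, N, H1)"
    using append1[of N N N "XA N h" N h] XA_ssp unfolding H1_def by simp
  have r2: "reach (N+N,N,N,H1) (N+N, N+N, N, H2)"
    using append2[of N "N+N" N YB N H1] YB_ssp unfolding H2_def by (simp add: mult_2)
  have r3: "reach (N+N,N+N,N,H2) (N+N, N+N, N+N, H3)"
    using append3[of N "N+N" "N+N" ZC N H2] ZC_ssp unfolding H3_def by simp
  show ?thesis using reach_trans[OF reach_trans[OF r1 r2] r3] by (simp add: mult_2)
qed

lemma H3_ent: "ent (2*N) (2*N) (2*N) H3"
  unfolding ent_def
proof (intro allI impI)
  fix i j l assume i: "i < 2*N" and j: "j < 2*N" and l: "l < 2*N"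
  show "H3 i j l \<in> {0,1,-1}"
  proof (cases "l < N")
    case False then show ?thesis unfolding H3_def ZC_def by simp
  next
    case lN: True
    show ?thesis
    proof (cases "j < N")
      case False then show ?thesis using lN unfolding H3_def H2_def YB_def by simp
    next
      case jN: True
      show ?thesis
      proof (cases "i < N")
        case False then show ?thesis using lN jN XA_vals[of N h "i - N" j l] unfolding H3_def H2_def H1_def by auto
      next
        case True then show ?thesis using lN jN ENT unfolding H3_def H2_def H1_def ent_def by auto
      qed
    qed
  qed
qed

end

context fill3
begin

lemma L1:
  assumes j: "j < 2*N" and l: "l < 2*N"
  shows "good (2*N) (\<lambda>i. H3 i j l)"
proof (cases "l < N")
  case False
  define s where "s = l - N"
  have s: "s < N" unfolding s_def using l False by simp
  have eq: "(\<lambda>i. H3 i j l) = (\<lambda>i. ZC s i j)" unfolding H3_def s_def using False by simp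
  obtain i0 where i0: "i0 < 2*N" "\<tau> s i0 = j" using tau_surj[OF s j] by blast
  have inj: "inj_on (\<tau> s) {..<2*N}" using T2 s by blast
  show ?thesis unfolding eq
  proof (rule good_one)
    show "\<forall>i<2*N. ZC s i j \<in> {0,1}" by (simp add: ZC_def)
    show "single (2*N) (\<lambda>i. ZC s i j)" unfolding single_def ZC_def using inj
      by (auto dest: inj_onD split: if_splits)
    have "pre (\<lambda>i. ZC s i j) (2*N) = ZC s i0 j"
      by (rule pre_ind[OF i0(1)]) (use inj i0 in \<open>auto simp: ZC_def dest: inj_onD\<close>)
    then show "pre (\<lambda>i. ZC s i j) (2*N) = 1" using i0 by (simp add: ZC_def)
  qed
next
  case lN: True
  show ?thesis
  proof (cases "j < N")
    case False
    define t where "t = j - N"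
    have t: "t < N" unfolding t_def using j False by simp
    have eq: "(\<lambda>i. H3 i j l) = (\<lambda>i. YB t i l)" unfolding H3_def H2_def t_def using False lN by simp
    have sl: "\<sigma> t l < 2*N" using S1 t l by blast
    show ?thesis unfolding eq
    proof (rule good_one)
      show "\<forall>i<2*N. YB t i l \<in> {0,1}" by (simp add: YB_def)
      show "single (2*N) (\<lambda>i. YB t i l)" by (rule YB_single_i)
      have "pre (\<lambda>i. YB t i l) (2*N) = YB t (\<sigma> t l) l"
        by (rule pre_ind[OF sl]) (auto simp: YB_def)
      then show "pre (\<lambda>i. YB t i l) (2*N) = 1" by (simp add: YB_def)
    qed
  next
    case jN: True
    have eq: "(\<lambda>i. H3 i j l) = (\<lambda>i. if i < N then h i j l else XA N h (i - N) j l)"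
      unfolding H3_def H2_def H1_def using lN jN by simp
    have "good (N+N) (\<lambda>i. if i < N then h i j l else XA N h (i - N) j l)"
    proof (rule good_concat)
      show "POK N (\<lambda>i. h i j l)" using P1 jN lN unfolding D1_def by blast
      show "\<forall>i<N. XA N h i j l \<in> {0,1}" using XA_vals by blast
      show "single N (\<lambda>k. XA N h k j l)" by (rule XA_single_k)
      show "pre (\<lambda>k. XA N h k j l) N = 1 - pre (\<lambda>i. h i j l) N"
        using XA_sumk[OF N0 jN lN] t1_01[OF jN lN] by auto
    qed
    then show ?thesis unfolding eq by (simp add: mult_2)
  qed
qed

lemma L2:
  assumes i: "i < 2*N" and l: "l < 2*N"
  shows "good (2*N) (\<lambda>j. H3 i j l)"
proof (cases "l < N")
  case False
  define s where "s = l - N"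
  have s: "s < N" unfolding s_def using l False by simp
  have eq: "(\<lambda>j. H3 i j l) = (\<lambda>j. ZC s i j)" unfolding H3_def s_def using False by simp
  have ti: "\<tau> s i < 2*N" using T1 s i by blast
  show ?thesis unfolding eq
  proof (rule good_one)
    show "\<forall>j<2*N. ZC s i j \<in> {0,1}" by (simp add: ZC_def)
    show "single (2*N) (\<lambda>j. ZC s i j)" unfolding single_def ZC_def by auto
    have "pre (\<lambda>j. ZC s i j) (2*N) = ZC s i (\<tau> s i)"
      by (rule pre_ind[OF ti]) (auto simp: ZC_def)
    then show "pre (\<lambda>j. ZC s i j) (2*N) = 1" by (simp add: ZC_def)
  qed
next
  case lN: True
  have eq: "(\<lambda>j. H3 i j l) = (\<lambda>j. if j < N then H1 i j l else YB (j - N) i l)"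
    unfolding H3_def H2_def using lN by simp
  have pf: "POK N (\<lambda>j. H1 i j l)"
  proof (cases "i < N")
    case True
    then have "(\<lambda>j. H1 i j l) = (\<lambda>j. h i j l)" unfolding H1_def by simp
    then show ?thesis using P2 True lN unfolding D2_def by simp
  next
    case False
    then have "(\<lambda>j. H1 i j l) = (\<lambda>j. XA N h (i - N) j l)" unfolding H1_def by simp
    moreover have "POK N (\<lambda>j. XA N h (i - N) j l)"
      by (rule single_POK[OF XA_single_j]) (use XA_vals in blast)
    ultimately show ?thesis by simp
  qed
  have "good (N+N) (\<lambda>j. if j < N then H1 i j l else YB (j - N) i l)"
  proof (rule good_concat[OF pf])
    show "\<forall>t<N. YB t i l \<in> {0,1}" by (simp add: YB_def)
    show "single N (\<lambda>t. YB t i l)" by (rule YB_single_t[OF lN i])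
    have "pre (\<lambda>j. H1 i j l) N \<in> {0,1}" using pf by (auto simp: POK_def)
    then show "pre (\<lambda>t. YB t i l) N = 1 - pre (\<lambda>j. H1 i j l) N"
      using pre_YB_t[OF lN i] unfolding E2_def by auto
  qed
  then show ?thesis unfolding eq by (simp add: mult_2)
qed

lemma L3:
  assumes i: "i < 2*N" and j: "j < 2*N"
  shows "good (2*N) (\<lambda>l. H3 i j l)"
proof -
  have eq: "(\<lambda>l. H3 i j l) = (\<lambda>l. if l < N then H2 i j l else ZC (l - N) i j)"
    unfolding H3_def by simp
  have pf: "POK N (\<lambda>l. H2 i j l)"
  proof (cases "j < N")
    case False
    then have "(\<lambda>l. H2 i j l) = (\<lambda>l. YB (j - N) i l)" unfolding H2_def by simp
    moreover have "POK N (\<lambda>l. YB (j - N) i l)"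
      by (rule single_POK[OF YB_single_l]) (use False j in \<open>auto simp: YB_def\<close>)
    ultimately show ?thesis by simp
  next
    case jN: True
    show ?thesis
    proof (cases "i < N")
      case True
      then have "(\<lambda>l. H2 i j l) = (\<lambda>l. h i j l)" unfolding H2_def H1_def using jN by simp
      then show ?thesis using P3 True jN unfolding D3_def by simp
    next
      case False
      then have "(\<lambda>l. H2 i j l) = (\<lambda>l. XA N h (i - N) j l)" unfolding H2_def H1_def using jN by simp
      moreover have "POK N (\<lambda>l. XA N h (i - N) j l)"
        by (rule single_POK[OF XA_single_l]) (use XA_vals in blast)
      ultimately show ?thesis by simp
    qed
  qed
  have gpre: "pre (\<lambda>s. ZC s i j) N = (if E3 i j then 1 else 0)"
  proof (cases "E3 i j")
    case True
    then obtain s0 where s0: "s0 < N" "\<tau> s0 i = j" and u: "\<forall>s. s < N \<and> \<tau> s i = j \<longrightarrow> s = s0"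
      using T3 i j by metis
    have "pre (\<lambda>s. ZC s i j) N = ZC s0 i j"
      by (rule pre_ind[OF s0(1)]) (use u in \<open>auto simp: ZC_def\<close>)
    then show ?thesis using True s0 by (simp add: ZC_def)
  next
    case False
    have "\<forall>s<N. ZC s i j = 0"
    proof (intro allI impI)
      fix s assume s: "s < N"
      have "E3 i (\<tau> s i)" using T1 s i by blast
      then show "ZC s i j = 0" using False by (auto simp: ZC_def)
    qed
    then show ?thesis using False unfolding pre_def by simp
  qed
  have gsing: "single N (\<lambda>s. ZC s i j)"
    unfolding single_def
  proof (intro allI impI)
    fix s s' assume a: "s < N" "s' < N" "ZC s i j \<noteq> 0" "ZC s' i j \<noteq> 0"
    then have e: "\<tau> s i = j" "\<tau> s' i = j" by (auto simp: ZC_def split: if_splits)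
    have "E3 i (\<tau> s i)" using T1 a(1) i by blast
    then have "E3 i j" using e by simp
    then have "\<exists>!s. s < N \<and> \<tau> s i = j" using T3 i j by blast
    then show "s = s'" using a e by auto
  qed
  have "good (N+N) (\<lambda>l. if l < N then H2 i j l else ZC (l - N) i j)"
  proof (rule good_concat[OF pf])
    show "\<forall>s<N. ZC s i j \<in> {0,1}" by (simp add: ZC_def)
    show "single N (\<lambda>s. ZC s i j)" by (rule gsing)
    have "pre (\<lambda>l. H2 i j l) N \<in> {0,1}" using pf by (auto simp: POK_def)
    then show "pre (\<lambda>s. ZC s i j) N = 1 - pre (\<lambda>l. H2 i j l) N"
      using gpre unfolding E3_def by auto
  qed
  then show ?thesis unfolding eq by (simp add: mult_2)
qed

end

theorem fill_thm:
  assumes "0 < N" "ent N N N h" "D1 POK N N N h" "D2 POK N N N h" "D3 POK N N N h"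
  shows "\<exists>G. reach (N,N,N,h) (2*N,2*N,2*N,G) \<and> ent (2*N) (2*N) (2*N) G \<and>
    D1 good (2*N) (2*N) (2*N) G \<and> D2 good (2*N) (2*N) (2*N) G \<and> D3 good (2*N) (2*N) (2*N) G"
proof -
  interpret fill N h using assms by unfold_locales
  obtain \<sigma> where s: "\<forall>i<N. \<forall>r<2*N. \<sigma> i r < 2*N \<and> F r (\<sigma> i r)" "\<forall>i<N. inj_on (\<sigma> i) {..<2*N}"
    "\<forall>r<2*N. \<forall>c<2*N. F r c \<longrightarrow> (\<exists>!i. i < N \<and> \<sigma> i r = c)"
    using regular_decomp[of "2*N" F N] F_rows F_cols by blast
  interpret fill2 N h \<sigma> using s by unfold_locales
  obtain \<tau> where t: "\<forall>i<N. \<forall>r<2*N. \<tau> i r < 2*N \<and> E3 r (\<tau> i r)" "\<forall>i<N. inj_on (\<tau> i) {..<2*N}"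
    "\<forall>r<2*N. \<forall>c<2*N. E3 r c \<longrightarrow> (\<exists>!i. i < N \<and> \<tau> i r = c)"
    using regular_decomp[of "2*N" E3 N] E3_rows E3_cols by blast
  interpret fill3 N h \<sigma> \<tau> using t by unfold_locales
  have "D1 good (2*N) (2*N) (2*N) H3" unfolding D1_def using L1 by blast
  moreover have "D2 good (2*N) (2*N) (2*N) H3" unfolding D2_def using L2 by blast
  moreover have "D3 good (2*N) (2*N) (2*N) H3" unfolding D3_def using L3 by blast
  ultimately show ?thesis using RF H3_ent by blast
qed

theorem mainTheorem20:
  fixes m' n' k' :: nat and A' :: hmat
  assumes "1 \<le> m'" and "1 \<le> n'" and "1 \<le> k'"
    and "\<forall>p<m'. \<forall>q<n'. \<forall>r<k'. A' p q r \<in> {0, 1, -1}"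
  shows "\<exists>n A fI fJ fK.
           n \<ge> max m' (max n' k') \<and> is_ASHM n A \<and>
           strict_mono_on {..<m'} fI \<and> fI ` {..<m'} \<subseteq> {..<n} \<and>
           strict_mono_on {..<n'} fJ \<and> fJ ` {..<n'} \<subseteq> {..<n} \<and>
           strict_mono_on {..<k'} fK \<and> fK ` {..<k'} \<subseteq> {..<n} \<and>
           (\<forall>p<m'. \<forall>q<n'. \<forall>r<k'. A' p q r = A (fI p) (fJ q) (fK r)) \<and>
           (\<exists>B. insert_plane\<^sup>*\<^sup>* (m', n', k', A') (n, n, n, B) \<and>
                (\<forall>i<n. \<forall>j<n. \<forall>l<n. B i j l = A i j l))"
proof -
  have e0: "ent m' n' k' A'" using assms(4) unfolding ent_def by blast
  obtain a b c G where g1: "m' \<le> a" "n' \<le> b" "k' \<le> c" "reach (m',n',k',A') (a,b,c,G)" "ent a b c G"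
    "D1 POK a b c G" "D2 POK a b c G" "D3 POK a b c G"
    using stage1[OF e0 assms(1-3)] by blast
  obtain N G2 where g2: "max a (max b c) = N" "reach (a,b,c,G) (N,N,N,G2)" "ent N N N G2"
    "D1 POK N N N G2" "D2 POK N N N G2" "D3 POK N N N G2"
    using cube[OF g1(5-8)] by blast
  have N0: "0 < N" using g2(1) g1(1) assms(1) by linarith
  obtain G3 where g3: "reach (N,N,N,G2) (2*N,2*N,2*N,G3)" "ent (2*N) (2*N) (2*N) G3"
    "D1 good (2*N) (2*N) (2*N) G3" "D2 good (2*N) (2*N) (2*N) G3" "D3 good (2*N) (2*N) (2*N) G3"
    using fill_thm[OF N0 g2(3-6)] by blast
  define n where "n = 2*N"
  have R: "reach (m',n',k',A') (n,n,n,G3)" unfolding n_def using reach_trans[OF reach_trans[OF g1(4) g2(2)] g3(1)] .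
  have big: "n \<ge> max m' (max n' k')" unfolding n_def using g1(1-3) g2(1) by linarith
  have ent3: "ent n n n G3" using g3(2) unfolding n_def .
  have ashm: "is_ASHM n G3"
    unfolding is_ASHM_def
  proof (intro conjI)
    show "\<forall>i<n. \<forall>j<n. \<forall>l<n. sign_entries (G3 i j l)" using ent3 unfolding ent_def sign_entries_def by blast
    show "\<forall>j<n. \<forall>l<n. alt_line n (\<lambda>i. G3 i j l)"
    proof (intro allI impI)
      fix j l assume "j < n" "l < n"
      then show "alt_line n (\<lambda>i. G3 i j l)"
        using good_alt[of n "\<lambda>i. G3 i j l"] g3(3) ent3 unfolding n_def D1_def ent_def by blast
    qed
    show "\<forall>i<n. \<forall>l<n. alt_line n (\<lambda>j. G3 i j l)"
    proof (intro allI impI)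
      fix i l assume "i < n" "l < n"
      then show "alt_line n (\<lambda>j. G3 i j l)"
        using good_alt[of n "\<lambda>j. G3 i j l"] g3(4) ent3 unfolding n_def D2_def ent_def by blast
    qed
    show "\<forall>i<n. \<forall>j<n. alt_line n (\<lambda>l. G3 i j l)"
    proof (intro allI impI)
      fix i j assume "i < n" "j < n"
      then show "alt_line n (\<lambda>l. G3 i j l)"
        using good_alt[of n "\<lambda>l. G3 i j l"] g3(5) ent3 unfolding n_def D3_def ent_def by blast
    qed
  qed
  obtain fI fJ fK where emb: "strict_mono_on {..<m'} fI" "fI ` {..<m'} \<subseteq> {..<n}"
    "strict_mono_on {..<n'} fJ" "fJ ` {..<n'} \<subseteq> {..<n}"
    "strict_mono_on {..<k'} fK" "fK ` {..<k'} \<subseteq> {..<n}"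
    "\<forall>p<m'. \<forall>q<n'. \<forall>r<k'. A' p q r = G3 (fI p) (fJ q) (fK r)"
  proof -
    have "embeds (m',n',k',A') (n,n,n,G3)" by (rule embeds_reach[OF R])
    then have "\<exists>fI fJ fK. strict_mono_on {..<m'} fI \<and> fI ` {..<m'} \<subseteq> {..<n} \<and>
        strict_mono_on {..<n'} fJ \<and> fJ ` {..<n'} \<subseteq> {..<n} \<and>
        strict_mono_on {..<k'} fK \<and> fK ` {..<k'} \<subseteq> {..<n} \<and>
        (\<forall>p<m'. \<forall>q<n'. \<forall>r<k'. A' p q r = G3 (fI p) (fJ q) (fK r))"
      unfolding embeds_def prod.case .
    then show ?thesis using that by (elim exE conjE) (rule that; assumption)
  qed
  obtain Y where Y: "insert_plane\<^sup>*\<^sup>* (m',n',k',A') Y" "sim Y (n,n,n,G3)" using R unfolding reach_def by blast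
  obtain a' b' c' B where YB: "Y = (a',b',c',B)" by (cases Y) auto
  have "a' = n" "b' = n" "c' = n" "\<forall>i<n. \<forall>j<n. \<forall>l<n. B i j l = G3 i j l" using Y(2) unfolding YB sim_def by auto
  then have Bex: "\<exists>B. insert_plane\<^sup>*\<^sup>* (m', n', k', A') (n, n, n, B) \<and> (\<forall>i<n. \<forall>j<n. \<forall>l<n. B i j l = G3 i j l)"
    using Y(1) YB by blast
  show ?thesis
    apply (rule exI[of _ n], rule exI[of _ G3], rule exI[of _ fI], rule exI[of _ fJ], rule exI[of _ fK])
    using big ashm emb Bex by (intro conjI) assumption+
qed

end
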